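(* Let $\mathbb{X},\mathbb{Y}$ be Banach spaces, $g:\mathbb{X}\to\mathbb{Y}$ continuously differentiable and $f:\mathbb{Y}\to\mathbb{R}$ convex and continuous. Let $S_f:=\{y:f(y)\le0\}$, $\mathcal{S}:=\{x:f(g(x))\le0\}$, and let $\bar x\in\mathcal{S}$ be such that $g$ is metrically regular around $\bar x$. Then the inequality $(f\circ g)(x)\le0$ has a local error bound at $\bar x$ if and only if $$\limsup_{x\xrightarrow{{\rm bd}(\mathcal{S})}\bar x}\mathbf{e}\Big(\{h\in\mathbb{X}:\mathbf{d}^+f(g(x),\nabla g(x)(h))\le1\},\ \nabla g(x)^{-1}\big(\mathbf{T}^{\mathbf B}(S_f,g(x))\big)\Big)<+\infty,$$ and moreover $\tau(\mathcal{S},\bar x)$ equals this $\limsup$.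
   Context: $\mathbf{B}(a,\delta)$ is the open ball with center $a$ and radius $\delta$; ${\rm bd}$ denotes boundary; $\mathbf{d}(x,D):=\inf\{\|x-y\|:y\in D\}$. Excess: $\mathbf{e}(C,D):=\sup_{x\in C}\mathbf{d}(x,D)$, with $\mathbf{e}(\emptyset,D)=0$ if $D\ne\emptyset$ and $=\infty$ otherwise. For convex $f$, $\mathbf{d}^+f(y,v):=\lim_{t\to0^+}\frac{f(y+tv)-f(y)}{t}$. Bouligand tangent cone $\mathbf{T}^{\mathbf B}(C,c)$: all $v$ with $v_n\to v$, $t_n\downarrow0$, $c+t_nv_n\in C$. "Continuously differentiable" means Fréchet differentiable with $x\mapsto\nabla g(x)$ continuous in operator norm. $g$ is metrically regular around $\bar x$ if there exist $\kappa>0$ and neighborhoods $U$ of $\bar x$, $V$ of $g(\bar x)$ with $\mathbf{d}(x,g^{-1}(y))\le\kappa\|g(x)-y\|$ for all $(x,y)\in U\times V$. Local error bound at $\bar x$: there exist $\tau,\delta>0$ with $\mathbf{d}(x,\mathcal{S})\le\tau\max\{f(g(x)),0\}$ for all $x\in\mathbf{B}(\bar x,\delta)$; $\tau(\mathcal{S},\bar x)$ is the infimum of all such $\tau$ (with $\inf\emptyset=+\infty$). $\limsup_{x\xrightarrow{D}\bar x}F(x):=\lim_{\delta\downarrow0}\sup\{F(x):x\in D\cap\mathbf{B}(\bar x,\delta)\}$, with the convention $\sup\emptyset=0$. *)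

theory Defs
  imports "HOL-Analysis.Analysis"
begin

definition setdist_e :: "'a::real_normed_vector \<Rightarrow> 'a set \<Rightarrow> ereal" where
  "setdist_e x D = (if D = {} then \<infinity> else ereal (infdist x D))"

definition excess :: "'a::real_normed_vector set \<Rightarrow> 'a set \<Rightarrow> ereal" where
  "excess C D = (if C = {} then (if D = {} then \<infinity> else 0)
                 else (SUP x\<in>C. setdist_e x D))"

definition dir_deriv :: "('a::real_normed_vector \<Rightarrow> real) \<Rightarrow> 'a \<Rightarrow> 'a \<Rightarrow> real" where
  "dir_deriv f y v = Lim (at_right 0) (\<lambda>t. (f (y + t *\<^sub>R v) - f y) / t)"

definition bouligand_cone :: "'a::real_normed_vector set \<Rightarrow> 'a \<Rightarrow> 'a set" where
  "bouligand_cone C c = {v. \<exists>vs ts. vs \<longlonglongrightarrow> v \<and> ts \<longlonglongrightarrow> 0 \<and> (\<forall>n. ts n > 0)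
                                   \<and> (\<forall>n. c + ts n *\<^sub>R vs n \<in> C)}"

definition metrically_regular :: "('a::real_normed_vector \<Rightarrow> 'b::real_normed_vector) \<Rightarrow> 'a \<Rightarrow> bool" where
  "metrically_regular g xbar = (\<exists>\<kappa>>0. \<exists>U V. open U \<and> xbar \<in> U \<and> open V \<and> g xbar \<in> V \<and>
      (\<forall>x\<in>U. \<forall>y\<in>V. setdist_e x (g -` {y}) \<le> ereal (\<kappa> * norm (g x - y))))"

definition local_error_bound :: "('a::real_normed_vector \<Rightarrow> real) \<Rightarrow> 'a \<Rightarrow> bool" where
  "local_error_bound \<phi> xbar = (\<exists>\<tau>>0. \<exists>\<delta>>0. \<forall>x\<in>ball xbar \<delta>.
      setdist_e x {z. \<phi> z \<le> 0} \<le> ereal (\<tau> * max (\<phi> x) 0))"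

text \<open>Error bound modulus tau(S,xbar): infimum of admissible tau (Inf {} = +infinity).\<close>
definition error_bound_modulus :: "('a::real_normed_vector \<Rightarrow> real) \<Rightarrow> 'a \<Rightarrow> ereal" where
  "error_bound_modulus \<phi> xbar = Inf {ereal \<tau> | \<tau>. \<tau> > 0 \<and> (\<exists>\<delta>>0. \<forall>x\<in>ball xbar \<delta>.
      setdist_e x {z. \<phi> z \<le> 0} \<le> ereal (\<tau> * max (\<phi> x) 0))}"

text \<open>limsup of F as x tends to xbar within D: lim_{delta -> 0+} sup {F x | x in D \<inter> B(xbar,delta)},
  with sup {} = 0.  Since the inner sup is monotone in delta, the limit is the infimum over delta > 0.\<close>
definition limsup_within :: "'a::metric_space set \<Rightarrow> 'a \<Rightarrow> ('a \<Rightarrow> ereal) \<Rightarrow> ereal" where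
  "limsup_within D xbar F = (INF \<delta>\<in>{0<..}.
      (if D \<inter> ball xbar \<delta> = {} then 0 else (SUP x\<in>D \<inter> ball xbar \<delta>. F x)))"

end

theory Submission
  imports Defs
begin



lemma infdist_approx:
  assumes "A \<noteq> {}" "e > 0"
  shows "\<exists>a\<in>A. dist x a < infdist x A + e"
proof -
  have "Inf ((\<lambda>a. dist x a) ` A) < infdist x A + e"
    using assms by (simp add: infdist_notempty)
  then show ?thesis using assms
    by (subst (asm) cInf_less_iff) (auto intro: bdd_belowI[where m=0])
qed

lemma convex_local_lip:
  fixes f :: "'b::real_normed_vector \<Rightarrow> real"
  assumes cf: "convex_on UNIV f" and fc: "continuous_on UNIV f"
  shows "\<exists>\<rho>>0. \<exists>L>0. \<forall>p\<in>ball y0 \<rho>. \<forall>q\<in>ball y0 \<rho>. f p \<le> f q + L * norm (p - q)"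
proof -
  obtain r where r: "r > 0" "\<forall>y. dist y y0 < r \<longrightarrow> dist (f y) (f y0) < 1"
    using fc unfolding continuous_on_iff by (meson UNIV_I zero_less_one)
  define \<rho> where "\<rho> = r / 2"
  have rho: "\<rho> > 0" using r by (simp add: \<rho>_def)
  have bnd: "\<bar>f y - f y0\<bar> < 1" if "dist y y0 < r" for y
    using r that by (simp add: dist_real_def)
  have "\<forall>p\<in>ball y0 \<rho>. \<forall>q\<in>ball y0 \<rho>. f p \<le> f q + (2 / \<rho>) * norm (p - q)"
  proof (intro ballI)
    fix p q assume p: "p \<in> ball y0 \<rho>" and q: "q \<in> ball y0 \<rho>"
    have pr0: "dist p y0 < \<rho>" "dist q y0 < \<rho>" using p q by (auto simp: dist_commute)
    have pr: "dist p y0 < r" "dist q y0 < r" using pr0 rho by (auto simp: \<rho>_def)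
    define \<theta> where "\<theta> = norm (p - q) / \<rho>"
    show "f p \<le> f q + (2 / \<rho>) * norm (p - q)"
    proof (cases "\<theta> < 1")
      case False
      then have "2 \<le> (2 / \<rho>) * norm (p - q)" using rho by (simp add: \<theta>_def field_simps)
      moreover have "f p - f q < 2" using bnd[OF pr(1)] bnd[OF pr(2)] by linarith
      ultimately show ?thesis by linarith
    next
      case True
      show ?thesis
      proof (cases "p = q")
        case True then show ?thesis by simp
      next
        case False
        then have thpos: "\<theta> > 0" using rho by (simp add: \<theta>_def)
        define w where "w = q + (1 / \<theta>) *\<^sub>R (p - q)"
        have "norm ((1 / \<theta>) *\<^sub>R (p - q)) = \<rho>" using thpos rho \<open>p \<noteq> q\<close> by (simp add: \<theta>_def)
        then have nn: "norm ((1 / \<theta>) *\<^sub>R (p - q)) = \<rho>" .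
        have nq: "norm (q - y0) < \<rho>" using pr0 by (simp add: dist_norm)
        have "dist w y0 = norm ((q - y0) + (1 / \<theta>) *\<^sub>R (p - q))" by (simp add: w_def dist_norm algebra_simps)
        also have "\<dots> \<le> norm (q - y0) + norm ((1 / \<theta>) *\<^sub>R (p - q))" by (rule norm_triangle_ineq)
        also have "\<dots> < r" using nq nn by (simp add: \<rho>_def)
        finally have "dist w y0 < r" .
        then have fw: "f w - f q < 2" using bnd[OF pr(2)] bnd by fastforce
        have peq: "p = (1 - \<theta>) *\<^sub>R q + \<theta> *\<^sub>R w"
          using thpos by (simp add: w_def algebra_simps)
        have "f p \<le> (1 - \<theta>) * f q + \<theta> * f w"
          unfolding peq using convex_onD[OF cf, of \<theta> q w] thpos True by simp
        then have "f p - f q \<le> \<theta> * (f w - f q)" by (simp add: algebra_simps)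
        also have "\<dots> \<le> \<theta> * 2" using fw thpos by simp
        also have "\<dots> = (2 / \<rho>) * norm (p - q)" by (simp add: \<theta>_def)
        finally show ?thesis by simp
      qed
    qed
  qed
  then show ?thesis using rho by (intro exI[of _ \<rho>] conjI exI[of _ "2 / \<rho>"]) auto
qed



lemma ekeland_dist:
  fixes S :: "'a::banach set"
  assumes clS: "closed S" and s0: "s0 \<in> S" and ep: "\<epsilon> > 0"
  shows "\<exists>b\<in>S. dist z b \<le> dist z s0 \<and> (\<forall>s\<in>S. dist z b - \<epsilon> * dist s b \<le> dist z s)"
proof -
  define F where "F s = dist z s" for s
  define R where "R x = {s\<in>S. F s + \<epsilon> * dist s x \<le> F x}" for x
  define e where "e n = (1/2::real)^n" for n
  have epos: "e n > 0" for n by (simp add: e_def)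
  have e0: "e \<longlonglongrightarrow> 0" unfolding e_def by (rule LIMSEQ_power_zero) simp
  have Rx: "x \<in> S \<Longrightarrow> x \<in> R x" for x by (simp add: R_def)
  have RS: "R x \<subseteq> S" for x by (auto simp: R_def)
  have Rtrans: "s \<in> R x" if "s \<in> R y" "y \<in> R x" for s x y
  proof -
    have "F s + \<epsilon> * dist s x \<le> F s + \<epsilon> * dist s y + \<epsilon> * dist y x"
      using mult_left_mono[OF dist_triangle[of s x y], of \<epsilon>] ep by (simp add: distrib_left)
    also have "\<dots> \<le> F x" using that by (simp add: R_def)
    finally show ?thesis using that by (simp add: R_def)
  qed
  have Rclosed: "closed (R x)" for x
  proof -
    have "R x = S \<inter> {s. F s + \<epsilon> * dist s x \<le> F x}" by (auto simp: R_def)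
    moreover have "closed {s. F s + \<epsilon> * dist s x \<le> F x}"
      unfolding F_def by (intro closed_Collect_le continuous_intros)
    ultimately show ?thesis using clS by auto
  qed
  have bdd: "bdd_below (F ` A)" for A by (rule bdd_belowI[where m=0]) (auto simp: F_def)
  have ex: "\<exists>x'. x' \<in> R x \<and> F x' < Inf (F ` R x) + e n" if "x \<in> S" for x n
  proof -
    have "Inf (F ` R x) < Inf (F ` R x) + e n" using epos by simp
    then show ?thesis using Rx[OF that] by (subst (asm) cInf_less_iff) (auto intro: bdd)
  qed
  define nxt where "nxt x n = (SOME x'. x' \<in> R x \<and> F x' < Inf (F ` R x) + e n)" for x n
  define xs where "xs = rec_nat s0 (\<lambda>n x. nxt x n)"
  have xs0: "xs 0 = s0" and xsS: "xs (Suc n) = nxt (xs n) n" for n by (simp_all add: xs_def)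
  have inS: "xs n \<in> S" for n
  proof (induction n)
    case 0 then show ?case using s0 by (simp add: xs0)
  next
    case (Suc n)
    from someI_ex[OF ex[OF Suc]] have "xs (Suc n) \<in> R (xs n)" by (simp add: xsS nxt_def)
    then show ?case using RS by auto
  qed
  have stepx: "xs (Suc n) \<in> R (xs n) \<and> F (xs (Suc n)) < Inf (F ` R (xs n)) + e n" for n
    using someI_ex[OF ex[OF inS[of n]]] by (simp add: xsS nxt_def)
  have nest: "R (xs m) \<subseteq> R (xs n)" if "n \<le> m" for m n
    using that
  proof (induction m rule: dec_induct)
    case base then show ?case by simp
  next
    case (step m)
    have "R (xs (Suc m)) \<subseteq> R (xs m)" using Rtrans stepx[of m] by blast
    then show ?case using step.IH by blast
  qed
  have small: "\<epsilon> * dist s (xs (Suc n)) \<le> e n" if "s \<in> R (xs (Suc n))" for s n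
  proof -
    have "s \<in> R (xs n)" using that Rtrans stepx[of n] by blast
    then have "Inf (F ` R (xs n)) \<le> F s" by (intro cInf_lower bdd) auto
    moreover have "F s + \<epsilon> * dist s (xs (Suc n)) \<le> F (xs (Suc n))" using that by (simp add: R_def)
    ultimately show ?thesis using stepx[of n] by linarith
  qed
  have inR: "xs m \<in> R (xs n)" if "n \<le> m" for m n
    using nest[OF that] Rx[OF inS[of m]] by blast
  have distsmall: "dist (xs m) (xs (Suc n)) \<le> e n / \<epsilon>" if "Suc n \<le> m" for m n
    using small[OF inR[OF that]] ep by (simp add: field_simps)
  have "Cauchy xs"
    unfolding Cauchy_def
  proof (intro allI impI)
    fix r :: real assume r: "r > 0"
    have "eventually (\<lambda>n. e n < \<epsilon> * r / 2) sequentially"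
      using e0 r ep by (intro order_tendstoD) auto
    then obtain N where N: "e N < \<epsilon> * r / 2" by (auto simp: eventually_sequentially)
    show "\<exists>M. \<forall>m\<ge>M. \<forall>n\<ge>M. dist (xs m) (xs n) < r"
    proof (intro exI allI impI)
      fix m n assume "Suc N \<le> m" "Suc N \<le> n"
      then have "dist (xs m) (xs (Suc N)) \<le> e N / \<epsilon>" "dist (xs n) (xs (Suc N)) \<le> e N / \<epsilon>"
        using distsmall[of N m] distsmall[of N n] by simp_all
      moreover have "e N / \<epsilon> < r / 2" using N ep by (simp add: field_simps)
      ultimately show "dist (xs m) (xs n) < r"
        using dist_triangle2[of "xs m" "xs n" "xs (Suc N)"] by linarith
    qed
  qed
  then obtain b where lim: "xs \<longlonglongrightarrow> b"
    using Cauchy_convergent convergent_def by blast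
  have bR: "b \<in> R (xs n)" for n
  proof -
    have "(\<lambda>m. xs (m + n)) \<longlonglongrightarrow> b" by (rule LIMSEQ_ignore_initial_segment[OF lim])
    moreover have "\<forall>m. xs (m + n) \<in> R (xs n)" using inR by simp
    ultimately show ?thesis by (metis closed_sequentially[OF Rclosed])
  qed
  have bS: "b \<in> S" using bR[of 0] RS by auto
  have "F b + \<epsilon> * dist b s0 \<le> F s0" using bR[of 0] by (simp add: R_def xs0)
  then have b1: "dist z b \<le> dist z s0" using ep by (simp add: F_def) (smt (verit) zero_le_dist mult_nonneg_nonneg)
  have b2: "dist z b - \<epsilon> * dist s b \<le> dist z s" if sS: "s \<in> S" for s
  proof (rule ccontr)
    assume neg: "\<not> dist z b - \<epsilon> * dist s b \<le> dist z s"
    then have sRb: "s \<in> R b" using sS by (simp add: R_def F_def)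
    have le: "dist s (xs (Suc n)) \<le> e n / \<epsilon>" for n
      using small[OF Rtrans[OF sRb bR[of "Suc n"]]] ep by (simp add: field_simps)
    have "(\<lambda>n. dist s (xs (Suc n))) \<longlonglongrightarrow> dist s b"
      using lim by (intro tendsto_intros) (simp add: LIMSEQ_Suc)
    moreover have "(\<lambda>n. e n / \<epsilon>) \<longlonglongrightarrow> 0 / \<epsilon>" by (intro tendsto_intros e0) (use ep in simp)
    ultimately have "dist s b \<le> 0 / \<epsilon>" using le by (intro LIMSEQ_le) auto
    then have "s = b" by simp
    then show False using neg by simp
  qed
  show ?thesis using bS b1 b2 by blast
qed



lemma convex_quot_mono:
  fixes f :: "'b::real_normed_vector \<Rightarrow> real"
  assumes cf: "convex_on UNIV f" and s: "0 < s" "s \<le> t"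
  shows "(f (y + s *\<^sub>R v) - f y) / s \<le> (f (y + t *\<^sub>R v) - f y) / t"
proof -
  have t: "t > 0" using s by simp
  define \<theta> where "\<theta> = s / t"
  have th: "0 \<le> \<theta>" "\<theta> \<le> 1" using s t by (auto simp: \<theta>_def field_simps)
  have eq: "y + s *\<^sub>R v = (1 - \<theta>) *\<^sub>R y + \<theta> *\<^sub>R (y + t *\<^sub>R v)"
  proof -
    have "\<theta> * t = s" using t by (simp add: \<theta>_def)
    then show ?thesis by (simp add: algebra_simps)
  qed
  have "f (y + s *\<^sub>R v) \<le> (1 - \<theta>) * f y + \<theta> * f (y + t *\<^sub>R v)"
    unfolding eq using convex_onD[OF cf th] by simp
  then have "f (y + s *\<^sub>R v) - f y \<le> \<theta> * (f (y + t *\<^sub>R v) - f y)" by (simp add: algebra_simps)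
  then have "(f (y + s *\<^sub>R v) - f y) / s \<le> \<theta> * (f (y + t *\<^sub>R v) - f y) / s"
    using s by (simp add: divide_right_mono)
  also have "\<dots> = (f (y + t *\<^sub>R v) - f y) / t" using s t by (simp add: \<theta>_def)
  finally show ?thesis .
qed

lemma convex_quot_lower:
  fixes f :: "'b::real_normed_vector \<Rightarrow> real"
  assumes cf: "convex_on UNIV f" and t: "0 < t"
  shows "f y - f (y - v) \<le> (f (y + t *\<^sub>R v) - f y) / t"
proof -
  define \<theta> where "\<theta> = t / (1 + t)"
  have th: "0 \<le> \<theta>" "\<theta> \<le> 1" using t by (auto simp: \<theta>_def field_simps)
  have eq: "y = (1 - \<theta>) *\<^sub>R (y + t *\<^sub>R v) + \<theta> *\<^sub>R (y - v)"
  proof -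
    have h: "(1 - \<theta>) * t - \<theta> = 0" using t by (simp add: \<theta>_def field_simps)
    have "(1 - \<theta>) *\<^sub>R (y + t *\<^sub>R v) + \<theta> *\<^sub>R (y - v) = y + ((1 - \<theta>) * t - \<theta>) *\<^sub>R v"
      by (simp add: algebra_simps)
    then show ?thesis using h by simp
  qed
  have "f y \<le> (1 - \<theta>) * f (y + t *\<^sub>R v) + \<theta> * f (y - v)"
    using convex_onD[OF cf th, of "y + t *\<^sub>R v" "y - v"] eq by simp
  then have "(1 + t) * f y \<le> (1 + t) * ((1 - \<theta>) * f (y + t *\<^sub>R v) + \<theta> * f (y - v))"
    using t by (intro mult_left_mono) auto
  also have "\<dots> = ((1 + t) * (1 - \<theta>)) * f (y + t *\<^sub>R v) + ((1 + t) * \<theta>) * f (y - v)"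
    by (simp add: algebra_simps)
  also have "(1 + t) * (1 - \<theta>) = 1" using t by (simp add: \<theta>_def field_simps)
  also have "(1 + t) * \<theta> = t" using t by (simp add: \<theta>_def field_simps)
  finally have "(1 + t) * f y \<le> f (y + t *\<^sub>R v) + t * f (y - v)" by simp
  then have "t * (f y - f (y - v)) \<le> f (y + t *\<^sub>R v) - f y" by (simp add: algebra_simps)
  then show ?thesis using t by (simp add: field_simps)
qed

lemma dir_deriv_tendsto:
  fixes f :: "'b::real_normed_vector \<Rightarrow> real"
  assumes cf: "convex_on UNIV f"
  shows "((\<lambda>t. (f (y + t *\<^sub>R v) - f y) / t) \<longlongrightarrow> dir_deriv f y v) (at_right 0)"
    and "t > 0 \<Longrightarrow> dir_deriv f y v \<le> (f (y + t *\<^sub>R v) - f y) / t"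
proof -
  define q where "q t = (f (y + t *\<^sub>R v) - f y) / t" for t
  define I where "I = Inf (q ` {0<..})"
  have bdd: "bdd_below (q ` {0<..})"
    using convex_quot_lower[OF cf] by (auto simp: q_def intro!: bdd_belowI[where m="f y - f (y - v)"])
  have Ile: "I \<le> q t" if "t > 0" for t
    unfolding I_def using that bdd by (intro cInf_lower) auto
  have lim: "(q \<longlongrightarrow> I) (at_right 0)"
  proof (rule order_tendstoI)
    fix a assume "a < I"
    then show "eventually (\<lambda>t. a < q t) (at_right 0)"
      using Ile eventually_at_right_less[of "0::real"]
      by (auto elim!: eventually_mono intro: less_le_trans)
  next
    fix a assume "I < a"
    then obtain t0 where t0: "t0 > 0" "q t0 < a"
      unfolding I_def using bdd by (subst (asm) cInf_less_iff) auto
    show "eventually (\<lambda>t. q t < a) (at_right 0)"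
      using eventually_at_right_real[OF t0(1)]
    proof (rule eventually_mono)
      fix t assume "t \<in> {0<..<t0}"
      then have "q t \<le> q t0" unfolding q_def by (intro convex_quot_mono[OF cf]) auto
      then show "q t < a" using t0 by simp
    qed
  qed
  have qeq: "(\<lambda>t. (f (y + t *\<^sub>R v) - f y) / t) = q" by (intro ext) (simp add: q_def)
  have D: "dir_deriv f y v = I"
    unfolding dir_deriv_def qeq using lim by (intro tendsto_Lim) auto
  show "((\<lambda>t. (f (y + t *\<^sub>R v) - f y) / t) \<longlongrightarrow> dir_deriv f y v) (at_right 0)"
    using lim D qeq by simp
  show "t > 0 \<Longrightarrow> dir_deriv f y v \<le> (f (y + t *\<^sub>R v) - f y) / t"
    using Ile D unfolding q_def by simp
qed

lemma dir_deriv_scale: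
  fixes f :: "'b::real_normed_vector \<Rightarrow> real"
  assumes cf: "convex_on UNIV f" and c: "c > 0"
  shows "dir_deriv f y (c *\<^sub>R v) = c * dir_deriv f y v"
proof -
  have fl: "filterlim (\<lambda>t. c * t) (at_right 0) (at_right (0::real))"
    unfolding filterlim_at
  proof
    show "\<forall>\<^sub>F t in at_right 0. c * t \<in> {0<..} \<and> c * t \<noteq> 0"
      using eventually_at_right_less[of "0::real"] c by (auto elim!: eventually_mono)
    have "((\<lambda>t. c * t) \<longlongrightarrow> c * 0) (at_right (0::real))"
      by (intro tendsto_intros)
    then show "((\<lambda>t. c * t) \<longlongrightarrow> 0) (at_right 0)" by simp
  qed
  have "((\<lambda>t. (f (y + (c * t) *\<^sub>R v) - f y) / (c * t)) \<longlongrightarrow> dir_deriv f y v) (at_right 0)"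
    using filterlim_compose[OF dir_deriv_tendsto(1)[OF cf, of y v] fl] by simp
  then have "((\<lambda>t. c * ((f (y + (c * t) *\<^sub>R v) - f y) / (c * t))) \<longlongrightarrow> c * dir_deriv f y v) (at_right 0)"
    by (intro tendsto_intros)
  moreover have "c * ((f (y + (c * t) *\<^sub>R v) - f y) / (c * t)) = (f (y + t *\<^sub>R (c *\<^sub>R v)) - f y) / t" for t
    using c by (cases "t = 0") (auto simp: field_simps)
  ultimately have "((\<lambda>t. (f (y + t *\<^sub>R (c *\<^sub>R v)) - f y) / t) \<longlongrightarrow> c * dir_deriv f y v) (at_right 0)"
    by simp
  then show ?thesis
    using dir_deriv_tendsto(1)[OF cf, of y "c *\<^sub>R v"] by (intro tendsto_unique[symmetric]) auto
qed



lemma linearization_bound: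
  fixes g :: "'a::real_normed_vector \<Rightarrow> 'b::real_normed_vector"
  assumes gd: "\<And>x. (g has_derivative blinfun_apply (g' x)) (at x)"
    and gc: "continuous_on UNIV g'" and eta: "\<eta> > 0"
  shows "\<exists>r>0. \<forall>a\<in>ball x0 r. \<forall>b\<in>ball x0 r. norm (g b - g a - g' a (b - a)) \<le> \<eta> * norm (b - a)"
proof -
  obtain r where r: "r > 0" "\<forall>x. dist x x0 < r \<longrightarrow> dist (g' x) (g' x0) < \<eta> / 2"
    using gc eta unfolding continuous_on_iff by (metis UNIV_I half_gt_zero)
  have "\<forall>a\<in>ball x0 r. \<forall>b\<in>ball x0 r. norm (g b - g a - g' a (b - a)) \<le> \<eta> * norm (b - a)"
  proof (intro ballI)
    fix a b assume a: "a \<in> ball x0 r" and b: "b \<in> ball x0 r"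
    have "norm (g b - g a - blinfun_apply (g' a) (b - a)) \<le> norm (b - a) * \<eta>"
    proof (rule differentiable_bound_linearization[where S="ball x0 r"])
      show "a + t *\<^sub>R (b - a) \<in> ball x0 r" if "t \<in> {0..1}" for t
      proof -
        have "a + t *\<^sub>R (b - a) = (1 - t) *\<^sub>R a + t *\<^sub>R b" by (simp add: algebra_simps)
        then show ?thesis using convex_ball[of x0 r] a b that
          by (metis atLeastAtMost_iff convexD_alt)
      qed
      show "(g has_derivative blinfun_apply (g' x)) (at x within ball x0 r)" for x
        using gd by (rule has_derivative_at_withinI)
      show "onorm (blinfun_apply (g' x) - blinfun_apply (g' a)) \<le> \<eta>" if "x \<in> ball x0 r" for x
      proof -
        have "dist (g' x) (g' x0) < \<eta> / 2" "dist (g' a) (g' x0) < \<eta> / 2"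
          using r that a by (auto simp: dist_commute)
        then have "norm (g' x - g' a) \<le> \<eta>"
          using dist_triangle2[of "g' x" "g' a" "g' x0"] by (simp add: dist_norm)
        moreover have "blinfun_apply (g' x) - blinfun_apply (g' a) = blinfun_apply (g' x - g' a)"
          by (simp add: fun_eq_iff blinfun.diff_left)
        ultimately show ?thesis by (simp add: norm_blinfun.rep_eq)
      qed
      show "a \<in> ball x0 r" by (rule a)
    qed
    then show "norm (g b - g a - g' a (b - a)) \<le> \<eta> * norm (b - a)" by (simp add: mult.commute)
  qed
  then show ?thesis using r by blast
qed



lemma exact_surj:
  fixes A :: "'a::banach \<Rightarrow>\<^sub>L 'b::real_normed_vector"
  assumes K: "K \<ge> 0"
    and approx: "\<And>r. \<exists>u. norm u \<le> K * norm r \<and> norm (A u - r) \<le> norm r / 2"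
  shows "\<exists>u. norm u \<le> 2 * K * norm r \<and> A u = r"
proof -
  define P where "P r = (SOME u. norm u \<le> K * norm r \<and> norm (A u - r) \<le> norm r / 2)" for r
  have P: "norm (P r) \<le> K * norm r \<and> norm (A (P r) - r) \<le> norm r / 2" for r
    unfolding P_def using someI_ex[OF approx] by blast
  define e where "e = rec_nat r (\<lambda>n x. x - A (P x))"
  have e0: "e 0 = r" and eS: "e (Suc n) = e n - A (P (e n))" for n by (simp_all add: e_def)
  define u where "u n = P (e n)" for n
  have enorm: "norm (e n) \<le> norm r * (1/2)^n" for n
  proof (induction n)
    case 0 then show ?case by (simp add: e0)
  next
    case (Suc n)
    have "norm (e (Suc n)) = norm (A (P (e n)) - e n)" by (simp add: eS norm_minus_commute)
    also have "\<dots> \<le> norm (e n) / 2" using P[of "e n"] by simp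
    also have "\<dots> \<le> norm r * (1/2)^n / 2" using Suc by simp
    finally show ?case by simp
  qed
  have unorm: "norm (u n) \<le> K * norm r * (1/2)^n" for n
    using P[of "e n"] mult_left_mono[OF enorm[of n] K] by (simp add: u_def mult.assoc)
  have sg: "summable (\<lambda>n. K * norm r * (1/2::real)^n)"
    by (intro summable_mult summable_geometric) simp
  have su: "summable u" by (rule summable_comparison_test'[OF sg unorm])
  have snu: "summable (\<lambda>n. norm (u n))"
    by (rule summable_comparison_test'[OF sg]) (use unorm in simp)
  have partial: "A (\<Sum>i<n. u i) = r - e n" for n
  proof (induction n)
    case 0 then show ?case by (simp add: e0)
  next
    case (Suc n)
    have "A (\<Sum>i<Suc n. u i) = A (\<Sum>i<n. u i) + A (u n)" by (simp add: blinfun.add_right)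
    also have "\<dots> = r - e (Suc n)" using Suc by (simp add: eS u_def)
    finally show ?case .
  qed
  have "(\<lambda>n. A (\<Sum>i<n. u i)) \<longlonglongrightarrow> A (suminf u)"
    by (intro blinfun.tendsto[OF tendsto_const] summable_LIMSEQ su)
  moreover have "(\<lambda>n. r - e n) \<longlonglongrightarrow> r - 0"
  proof (rule tendsto_diff[OF tendsto_const])
    have "(\<lambda>n. norm r * (1/2::real)^n) \<longlonglongrightarrow> norm r * 0"
      by (intro tendsto_mult tendsto_const LIMSEQ_power_zero) simp
    then have g0: "(\<lambda>n. norm r * (1/2::real)^n) \<longlonglongrightarrow> 0" by simp
    have "eventually (\<lambda>n. norm (e n) \<le> norm r * (1/2::real)^n) sequentially"
      using enorm by simp
    then show "e \<longlonglongrightarrow> 0" by (rule Lim_null_comparison[OF _ g0])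
  qed
  moreover have "(\<lambda>n. A (\<Sum>i<n. u i)) = (\<lambda>n. r - e n)" using partial by (simp add: fun_eq_iff)
  ultimately have Au: "A (suminf u) = r" by (metis LIMSEQ_unique diff_zero)
  have "norm (suminf u) \<le> (\<Sum>n. norm (u n))" by (rule summable_norm[OF snu])
  also have "\<dots> \<le> (\<Sum>n. K * norm r * (1/2::real)^n)"
    by (intro suminf_le snu sg unorm)
  also have "\<dots> = K * norm r * 2"
    by (subst suminf_mult) (simp_all add: suminf_geometric)
  finally show ?thesis using Au by (intro exI[of _ "suminf u"]) (simp add: mult_ac)
qed



lemma bouligand_convex:
  assumes C: "convex C" and c: "c \<in> C" and s: "s \<in> C" and l: "l \<ge> 0"
  shows "l *\<^sub>R (s - c) \<in> bouligand_cone C c"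
  unfolding bouligand_cone_def
proof (intro CollectI exI[of _ "\<lambda>n. l *\<^sub>R (s - c)"] exI[of _ "\<lambda>n. 1 / ((l + 1) * (real n + 1))"] conjI allI)
  show "(\<lambda>n. l *\<^sub>R (s - c)) \<longlonglongrightarrow> l *\<^sub>R (s - c)" by simp
  have i0: "(\<lambda>n. 1 / (real n + 1)) \<longlonglongrightarrow> 0"
    using LIMSEQ_inverse_real_of_nat by (simp add: inverse_eq_divide add.commute)
  have "(\<lambda>n. 1 / (l + 1) * (1 / (real n + 1))) \<longlonglongrightarrow> 1 / (l + 1) * 0"
    by (intro tendsto_mult tendsto_const i0)
  then show "(\<lambda>n. 1 / ((l + 1) * (real n + 1))) \<longlonglongrightarrow> 0" by simp
  fix n
  define tn where "tn = 1 / ((l + 1) * (real n + 1))"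
  show "1 / ((l + 1) * (real n + 1)) > 0" using l by simp
  have den: "(l + 1) * (real n + 1) > 0" using l by simp
  have "0 \<le> l * real n" using l by simp
  moreover have "(l + 1) * (real n + 1) = l * real n + l + real n + 1" by (simp add: algebra_simps)
  ultimately have "l \<le> (l + 1) * (real n + 1)" by linarith
  then have "l / ((l + 1) * (real n + 1)) \<le> 1" using den by (simp add: divide_le_eq_1_pos)
  moreover have "tn * l = l / ((l + 1) * (real n + 1))" by (simp add: tn_def)
  ultimately have t01: "0 \<le> tn * l" "tn * l \<le> 1" using l den by (auto simp: tn_def)
  have "c + tn *\<^sub>R l *\<^sub>R (s - c) = (1 - tn * l) *\<^sub>R c + (tn * l) *\<^sub>R s"
    by (simp add: algebra_simps)
  then have "c + tn *\<^sub>R l *\<^sub>R (s - c) \<in> C"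
    using C c s t01 by (metis convexD_alt)
  then show "c + (1 / ((l + 1) * (real n + 1))) *\<^sub>R (\<lambda>n. l *\<^sub>R (s - c)) n \<in> C"
    by (simp add: tn_def)
qed

lemma bouligand_scale:
  assumes w: "w \<in> bouligand_cone C c" and l: "l > 0"
  shows "l *\<^sub>R w \<in> bouligand_cone C c"
proof -
  obtain vs ts where h: "vs \<longlonglongrightarrow> w" "ts \<longlonglongrightarrow> 0" "\<forall>n. ts n > 0" "\<forall>n. c + ts n *\<^sub>R vs n \<in> C"
    using w unfolding bouligand_cone_def by blast
  show ?thesis unfolding bouligand_cone_def
  proof (intro CollectI exI conjI allI)
    show "(\<lambda>n. l *\<^sub>R vs n) \<longlonglongrightarrow> l *\<^sub>R w" using h by (intro tendsto_intros)
    have "(\<lambda>n. ts n / l) \<longlonglongrightarrow> 0 / l" using h l by (intro tendsto_intros) auto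
    then show "(\<lambda>n. ts n / l) \<longlonglongrightarrow> 0" by simp
    fix n
    show "ts n / l > 0" using h l by simp
    have e: "c + (ts n / l) *\<^sub>R l *\<^sub>R vs n = c + ts n *\<^sub>R vs n" using l by simp
    have "c + ts n *\<^sub>R vs n \<in> C" using h by blast
    then show "c + (ts n / l) *\<^sub>R l *\<^sub>R vs n \<in> C" unfolding e .
  qed
qed





lemma mr_point:
  assumes MR: "\<forall>x\<in>U. \<forall>y\<in>V. setdist_e x (g -` {y}) \<le> ereal (\<kappa> * norm (g x - y))"
    and x: "x \<in> U" and y: "y \<in> V" and e: "e > 0"
  shows "\<exists>x'. g x' = y \<and> dist x x' < \<kappa> * norm (g x - y) + e"
proof -
  have le: "setdist_e x (g -` {y}) \<le> ereal (\<kappa> * norm (g x - y))" using MR x y by blast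
  then have ne: "g -` {y} \<noteq> {}" by (auto simp: setdist_e_def)
  then have "infdist x (g -` {y}) \<le> \<kappa> * norm (g x - y)" using le by (simp add: setdist_e_def)
  moreover obtain x' where "x' \<in> g -` {y}" "dist x x' < infdist x (g -` {y}) + e"
    using infdist_approx[OF ne e] by blast
  ultimately show ?thesis by force
qed

lemma approx_surj:
  fixes g :: "'a::banach \<Rightarrow> 'b::banach" and A :: "'a \<Rightarrow>\<^sub>L 'b"
  assumes MR: "\<forall>x\<in>U. \<forall>y\<in>V. setdist_e x (g -` {y}) \<le> ereal (\<kappa> * norm (g x - y))"
    and kp: "\<kappa> > 0" and x: "x \<in> U" and gx: "g x \<in> V" and oV: "open V"
    and gd: "(g has_derivative blinfun_apply A) (at x)"
  shows "\<exists>u. norm u \<le> (\<kappa> + 1) * norm r \<and> norm (A u - r) \<le> norm r / 2"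
proof (cases "r = 0")
  case True then show ?thesis by (intro exI[of _ 0]) simp
next
  case False
  define nr where "nr = norm r"
  have nr: "nr > 0" using False by (simp add: nr_def)
  define \<eta> where "\<eta> = 1 / (2 * (\<kappa> + 1))"
  have eta: "\<eta> > 0" using kp by (simp add: \<eta>_def)
  obtain d where d: "d > 0" "\<forall>y. norm (y - x) < d \<longrightarrow> norm (g y - g x - A (y - x)) \<le> \<eta> * norm (y - x)"
    using gd eta unfolding has_derivative_at_alt by blast
  obtain rV where rV: "rV > 0" "ball (g x) rV \<subseteq> V" using oV gx open_contains_ball by blast
  define m where "m = min rV (d / (\<kappa> + 1))"
  define s where "s = m / (2 * nr)"
  have s: "s > 0" using rV d kp nr by (simp add: s_def m_def)
  have snr: "s * nr = m / 2" using nr by (simp add: s_def)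
  have m1: "m \<le> rV" by (simp add: m_def)
  have m2: "m > 0" using rV d kp by (simp add: m_def)
  have s1: "s * nr < rV" using snr m1 m2 by linarith
  have s2: "(\<kappa> + 1) * (s * nr) < d"
  proof -
    have mm: "m \<le> d / (\<kappa> + 1)" by (simp add: m_def)
    have e1: "(\<kappa> + 1) * (s * nr) = (\<kappa> + 1) * m / 2" using snr by simp
    have e2: "(\<kappa> + 1) * m \<le> (\<kappa> + 1) * (d / (\<kappa> + 1))" using kp mm by (intro mult_left_mono) auto
    have e3: "(\<kappa> + 1) * (d / (\<kappa> + 1)) = d" using kp by simp
    show ?thesis using e1 e2 e3 d by linarith
  qed
  define y where "y = g x + s *\<^sub>R r"
  have "dist (g x) y = s * nr" using s by (simp add: y_def dist_norm nr_def)
  then have yV: "y \<in> V" using rV s1 by auto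
  have gxy: "norm (g x - y) = s * nr" using s by (simp add: y_def nr_def)
  obtain x' where x': "g x' = y" "dist x x' < \<kappa> * (s * nr) + s * nr"
    using mr_point[OF MR x yV, of "s * nr"] s nr gxy by auto
  have dx: "norm (x' - x) < (\<kappa> + 1) * (s * nr)" using x' by (simp add: dist_norm norm_minus_commute algebra_simps)
  define u where "u = (1 / s) *\<^sub>R (x' - x)"
  have "norm u = norm (x' - x) / s" using s by (simp add: u_def)
  also have "\<dots> \<le> (\<kappa> + 1) * nr" using dx s by (simp add: field_simps)
  finally have un: "norm u \<le> (\<kappa> + 1) * norm r" by (simp add: nr_def)
  have Au: "A u = (1 / s) *\<^sub>R A (x' - x)" by (simp only: u_def blinfun.scaleR_right)
  have gr: "g x' - g x = s *\<^sub>R r" by (simp add: x'(1) y_def)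
  have "A u - r = (1 / s) *\<^sub>R (A (x' - x) - (g x' - g x))"
    using s by (simp add: Au gr scaleR_diff_right)
  then have "norm (A u - r) = norm (g x' - g x - A (x' - x)) / s"
    using s by (simp add: norm_minus_commute)
  also have "\<dots> \<le> \<eta> * norm (x' - x) / s"
    using d(2) dx s2 s by (intro divide_right_mono) auto
  also have "\<dots> \<le> \<eta> * ((\<kappa> + 1) * (s * nr)) / s"
    using dx eta s by (intro divide_right_mono mult_left_mono) auto
  also have "\<dots> = (\<eta> * (\<kappa> + 1)) * (s * nr) / s" by (simp add: mult.assoc)
  also have "\<dots> = (\<eta> * (\<kappa> + 1)) * nr" using s by simp
  also have "\<eta> * (\<kappa> + 1) = 1 / 2" using kp by (simp add: \<eta>_def)
  also have "1 / 2 * nr = nr / 2" by simp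
  finally show ?thesis using un by (auto simp: nr_def)
qed




lemma approx_tangent:
  fixes g :: "'a::banach \<Rightarrow> 'b::banach" and A :: "'a \<Rightarrow>\<^sub>L 'b"
  assumes MR: "\<forall>x\<in>U. \<forall>y\<in>V. setdist_e x (g -` {y}) \<le> ereal (\<kappa> * norm (g x - y))"
    and kp: "\<kappa> > 0" and oU: "open U" and oV: "open V" and b: "b \<in> U" and gb: "g b \<in> V"
    and gd: "(g has_derivative blinfun_apply A) (at b)"
    and w: "A w \<in> bouligand_cone Sf (g b)" and xi: "\<xi> > 0"
  shows "\<exists>t w'. 0 < t \<and> t \<le> 1 \<and> g (b + t *\<^sub>R w') \<in> Sf \<and> norm (w' - w) \<le> \<xi>"
proof -
  obtain vs ts where h: "vs \<longlonglongrightarrow> A w" "ts \<longlonglongrightarrow> 0" "\<forall>n. ts n > 0" "\<forall>n. g b + ts n *\<^sub>R vs n \<in> Sf"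
    using w unfolding bouligand_cone_def by blast
  define nw where "nw = norm w"
  have nw: "nw \<ge> 0" by (simp add: nw_def)
  define \<eta>0 where "\<eta>0 = \<xi> / (3 * \<kappa> * (nw + 1))"
  have eta0: "\<eta>0 > 0" using xi kp nw by (simp add: \<eta>0_def)
  obtain d where d: "d > 0" "\<forall>y. norm (y - b) < d \<longrightarrow> norm (g y - g b - A (y - b)) \<le> \<eta>0 * norm (y - b)"
    using gd eta0 unfolding has_derivative_at_alt by blast
  obtain rU where rU: "rU > 0" "ball b rU \<subseteq> U" using oU b open_contains_ball by blast
  obtain rV where rV: "rV > 0" "ball (g b) rV \<subseteq> V" using oV gb open_contains_ball by blast
  define c where "c = min 1 (min (d / (nw + 1)) (rU / (nw + 1)))"
  have c: "c > 0" using d rU nw by (simp add: c_def)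
  have E1: "eventually (\<lambda>n. ts n < c) sequentially"
    using h(2) c by (intro order_tendstoD) auto
  have "(\<lambda>n. ts n * norm (vs n)) \<longlonglongrightarrow> 0 * norm (A w)"
    using h by (intro tendsto_intros)
  then have E2: "eventually (\<lambda>n. ts n * norm (vs n) < rV) sequentially"
    using rV by (intro order_tendstoD) auto
  have E3: "eventually (\<lambda>n. dist (vs n) (A w) < \<xi> / (3 * \<kappa>)) sequentially"
    using h(1) xi kp by (intro tendstoD) auto
  have "eventually (\<lambda>n. ts n < c \<and> ts n * norm (vs n) < rV \<and> dist (vs n) (A w) < \<xi> / (3 * \<kappa>)) sequentially"
    using eventually_conj[OF E1 eventually_conj[OF E2 E3]] .
  then obtain N where "\<forall>n\<ge>N. ts n < c \<and> ts n * norm (vs n) < rV \<and> dist (vs n) (A w) < \<xi> / (3 * \<kappa>)"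
    unfolding eventually_sequentially by blast
  then obtain n where n: "ts n < c" "ts n * norm (vs n) < rV" "dist (vs n) (A w) < \<xi> / (3 * \<kappa>)"
    by blast
  define t where "t = ts n"
  have t: "t > 0" "t \<le> 1" "t < d / (nw + 1)" "t < rU / (nw + 1)"
    using h(3) n(1) by (auto simp: t_def c_def)
  have tnw: "t * nw < d" "t * nw < rU"
  proof -
    have "t * nw \<le> t * (nw + 1)" using t by simp
    moreover have "t * (nw + 1) < d" "t * (nw + 1) < rU" using t nw by (simp_all add: field_simps)
    ultimately show "t * nw < d" "t * nw < rU" by linarith+
  qed
  define x1 where "x1 = b + t *\<^sub>R w"
  define y1 where "y1 = g b + t *\<^sub>R vs n"
  have y1S: "y1 \<in> Sf" using h(4) by (simp add: y1_def t_def)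
  have nx1: "norm (x1 - b) = t * nw" using t by (simp add: x1_def nw_def)
  have x1U: "x1 \<in> U" using rU nx1 tnw by (auto simp: dist_norm norm_minus_commute)
  have "dist (g b) y1 = t * norm (vs n)" using t by (simp add: y1_def dist_norm)
  then have y1V: "y1 \<in> V" using rV n(2) by (auto simp: t_def)
  obtain x' where x': "g x' = y1" "dist x1 x' < \<kappa> * norm (g x1 - y1) + t * \<xi> / 3"
    using mr_point[OF MR x1U y1V, of "t * \<xi> / 3"] t xi by auto
  have Ax: "A (x1 - b) = t *\<^sub>R A w" by (simp add: x1_def blinfun.scaleR_right)
  have eq: "g x1 - y1 = (g x1 - g b - A (x1 - b)) + t *\<^sub>R (A w - vs n)"
    by (simp add: Ax y1_def algebra_simps)
  have "norm (g x1 - y1) \<le> norm (g x1 - g b - A (x1 - b)) + norm (t *\<^sub>R (A w - vs n))"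
    unfolding eq by (rule norm_triangle_ineq)
  also have "norm (t *\<^sub>R (A w - vs n)) = t * norm (A w - vs n)" using t by simp
  also have "norm (g x1 - g b - A (x1 - b)) \<le> \<eta>0 * (t * nw)"
  proof -
    have "norm (x1 - b) < d" using nx1 tnw by simp
    then have "norm (g x1 - g b - A (x1 - b)) \<le> \<eta>0 * norm (x1 - b)" using d(2) by blast
    then show ?thesis using nx1 by simp
  qed
  finally have ng: "norm (g x1 - y1) \<le> \<eta>0 * (t * nw) + t * norm (A w - vs n)" by simp
  have k1: "\<kappa> * (\<eta>0 * (t * nw)) \<le> t * \<xi> / 3"
  proof -
    have ke: "\<kappa> * \<eta>0 = \<xi> / (3 * (nw + 1))" using kp by (simp add: \<eta>0_def)
    have "\<kappa> * (\<eta>0 * (t * nw)) = (\<kappa> * \<eta>0) * (t * nw)" by (simp add: mult.assoc)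
    also have "\<dots> = \<xi> / (3 * (nw + 1)) * (t * nw)" by (simp only: ke)
    also have "\<dots> = t * (\<xi> / 3) * (nw / (nw + 1))" using nw by (simp add: field_simps)
    finally have "\<kappa> * (\<eta>0 * (t * nw)) = t * (\<xi> / 3) * (nw / (nw + 1))" .
    also have "\<dots> \<le> t * (\<xi> / 3) * 1" using t xi nw by (intro mult_left_mono) auto
    finally show ?thesis by simp
  qed
  have k2: "\<kappa> * (t * norm (A w - vs n)) \<le> t * \<xi> / 3"
  proof -
    have "norm (A w - vs n) \<le> \<xi> / (3 * \<kappa>)" using n(3) by (simp add: dist_norm norm_minus_commute)
    then have "\<kappa> * norm (A w - vs n) \<le> \<kappa> * (\<xi> / (3 * \<kappa>))" using kp by (intro mult_left_mono) auto
    also have "\<dots> = \<xi> / 3" using kp by simp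
    finally have "\<kappa> * norm (A w - vs n) \<le> \<xi> / 3" .
    then have "t * (\<kappa> * norm (A w - vs n)) \<le> t * (\<xi> / 3)" using t by (intro mult_left_mono) auto
    then show ?thesis by (simp add: mult_ac)
  qed
  have "\<kappa> * norm (g x1 - y1) \<le> \<kappa> * (\<eta>0 * (t * nw) + t * norm (A w - vs n))"
    using ng kp by (intro mult_left_mono) auto
  then have dx: "dist x1 x' < t * \<xi>" using x' k1 k2 by (simp add: distrib_left)
  define w' where "w' = (1 / t) *\<^sub>R (x' - b)"
  have bw: "b + t *\<^sub>R w' = x'" using t by (simp add: w'_def)
  have "w' - w = (1 / t) *\<^sub>R (x' - x1)" using t by (simp add: w'_def x1_def algebra_simps)
  then have "norm (w' - w) = dist x1 x' / t" using t by (simp add: dist_norm norm_minus_commute)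
  also have "\<dots> \<le> \<xi>" using dx t by (simp add: field_simps)
  finally show ?thesis using t bw x'(1) y1S by (intro exI[of _ t] exI[of _ w']) auto
qed

lemma keyB:
  fixes g :: "'a::banach \<Rightarrow> 'b::banach" and A :: "'a \<Rightarrow>\<^sub>L 'b"
  assumes MR: "\<forall>x\<in>U. \<forall>y\<in>V. setdist_e x (g -` {y}) \<le> ereal (\<kappa> * norm (g x - y))"
    and kp: "\<kappa> > 0" and oU: "open U" and oV: "open V" and b: "b \<in> U" and gb: "g b \<in> V"
    and gd: "(g has_derivative blinfun_apply A) (at b)"
    and w: "A w \<in> bouligand_cone Sf (g b)" and ep: "\<epsilon> \<ge> 0"
    and ek: "\<And>s. g s \<in> Sf \<Longrightarrow> norm k - \<epsilon> * norm (s - b) \<le> norm (k - (s - b))"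
  shows "norm k - \<epsilon> * norm w \<le> norm (k - w)"
proof (rule field_le_epsilon)
  fix \<xi> :: real assume xi: "\<xi> > 0"
  define \<xi>' where "\<xi>' = \<xi> / (1 + \<epsilon>)"
  have xi': "\<xi>' > 0" using xi ep by (simp add: \<xi>'_def)
  obtain t w' where tw: "0 < t" "t \<le> 1" "g (b + t *\<^sub>R w') \<in> Sf" "norm (w' - w) \<le> \<xi>'"
    using approx_tangent[OF MR kp oU oV b gb gd w xi'] by blast
  have "norm k - \<epsilon> * norm (t *\<^sub>R w') \<le> norm (k - t *\<^sub>R w')"
    using ek[OF tw(3)] by simp
  also have "norm (k - t *\<^sub>R w') = norm ((1 - t) *\<^sub>R k + t *\<^sub>R (k - w'))"
    by (simp add: algebra_simps)
  also have "\<dots> \<le> (1 - t) * norm k + t * norm (k - w')"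
    using tw(1,2) norm_triangle_ineq[of "(1 - t) *\<^sub>R k" "t *\<^sub>R (k - w')"] by simp
  finally have "t * (norm k - \<epsilon> * norm w') \<le> t * norm (k - w')"
    using tw(1) by (simp add: algebra_simps)
  then have main: "norm k - \<epsilon> * norm w' \<le> norm (k - w')" using tw(1) by simp
  have n1: "norm w' \<le> norm w + \<xi>'" using tw(4) norm_triangle_ineq2[of w' w] by simp
  have n2: "norm (k - w') \<le> norm (k - w) + \<xi>'"
    using tw(4) norm_triangle_ineq[of "k - w" "w - w'"] by (simp add: norm_minus_commute)
  have "\<epsilon> * norm w \<ge> \<epsilon> * norm w' - \<epsilon> * \<xi>'"
    using mult_left_mono[OF n1 ep] by (simp add: algebra_simps)
  moreover have "(1 + \<epsilon>) * \<xi>' = \<xi>" using ep by (simp add: \<xi>'_def)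
  ultimately show "norm k - \<epsilon> * norm w \<le> norm (k - w) + \<xi>"
    using main n2 by (simp add: algebra_simps)
qed




lemma convex_sublevel0:
  fixes f :: "'b::real_normed_vector \<Rightarrow> real"
  assumes cf: "convex_on UNIV f"
  shows "convex {y. f y \<le> 0}"
  unfolding convex_alt
proof (intro ballI allI impI)
  fix x y and u :: real assume x: "x \<in> {y. f y \<le> 0}" and y: "y \<in> {y. f y \<le> 0}" and u: "0 \<le> u \<and> u \<le> 1"
  have "f ((1 - u) *\<^sub>R x + u *\<^sub>R y) \<le> (1 - u) * f x + u * f y"
    using convex_onD[OF cf, of u x y] u by simp
  also have "\<dots> \<le> 0" using x y u by (simp add: add_nonpos_nonpos mult_nonneg_nonpos)
  finally show "(1 - u) *\<^sub>R x + u *\<^sub>R y \<in> {y. f y \<le> 0}" by simp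
qed

lemma setdist_e_ne: "D \<noteq> {} \<Longrightarrow> setdist_e x D = ereal (infdist x D)"
  by (simp add: setdist_e_def)

lemma claimA_point:
  fixes g :: "'a::banach \<Rightarrow> 'b::banach" and g' :: "'a \<Rightarrow> ('a \<Rightarrow>\<^sub>L 'b)" and f :: "'b \<Rightarrow> real"
  assumes gd: "\<And>x. (g has_derivative blinfun_apply (g' x)) (at x)"
    and cf: "convex_on UNIV f" and fc: "continuous_on UNIV f"
    and MR: "\<forall>x\<in>U. \<forall>y\<in>V. setdist_e x (g -` {y}) \<le> ereal (\<kappa> * norm (g x - y))"
    and kp: "\<kappa> > 0" and oV: "open V" and bU: "b \<in> U" and gbV: "g b \<in> V"
    and fb: "f (g b) = 0"
    and tau: "\<tau> > 0"
    and EB: "\<forall>x\<in>ball xbar \<delta>. setdist_e x {z. f (g z) \<le> 0} \<le> ereal (\<tau> * max (f (g x)) 0)"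
    and bB: "b \<in> ball xbar \<delta>" and Sne: "{z. f (g z) \<le> 0} \<noteq> {}"
    and hC: "dir_deriv f (g b) (g' b h) \<le> 1" and ep: "\<epsilon> > 0"
  shows "infdist h {h. g' b h \<in> bouligand_cone {y. f y \<le> 0} (g b)} \<le> \<tau> + \<epsilon>"
proof -
  define y where "y = g b"
  define A where "A = g' b"
  define S where "S = {z. f (g z) \<le> 0}"
  define Sf where "Sf = {y. f y \<le> (0::real)}"
  define D where "D = {h. A h \<in> bouligand_cone Sf y}"
  have gdb: "(g has_derivative blinfun_apply A) (at b)" using gd by (simp add: A_def)
  have exact: "\<exists>u. norm u \<le> 2 * (\<kappa> + 1) * norm r \<and> A u = r" for r
    using exact_surj[of "\<kappa> + 1" A r] approx_surj[OF MR kp bU gbV oV gdb] kp by auto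
  obtain \<rho>f L where lip: "\<rho>f > 0" "L > 0" "\<forall>p\<in>ball y \<rho>f. \<forall>q\<in>ball y \<rho>f. f p \<le> f q + L * norm (p - q)"
    using convex_local_lip[OF cf fc, of y] by blast
  define nh where "nh = norm h"
  have nh: "nh \<ge> 0" by (simp add: nh_def)
  define Mk where "Mk = nh + \<tau> + 1 + \<epsilon>"
  have Mk: "Mk > 0" using nh tau ep by (simp add: Mk_def)
  define \<epsilon>1 where "\<epsilon>1 = min 1 (\<epsilon> / (2 * (\<tau> + 1)))"
  have e1: "\<epsilon>1 > 0" "\<epsilon>1 \<le> 1" "\<epsilon>1 * (\<tau> + 1) \<le> \<epsilon> / 2"
  proof -
    show "\<epsilon>1 > 0" "\<epsilon>1 \<le> 1" using ep tau by (auto simp: \<epsilon>1_def)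
    have "\<epsilon>1 \<le> \<epsilon> / (2 * (\<tau> + 1))" by (simp add: \<epsilon>1_def)
    then have "\<epsilon>1 * (\<tau> + 1) \<le> \<epsilon> / (2 * (\<tau> + 1)) * (\<tau> + 1)" using tau by (intro mult_right_mono) auto
    also have "\<dots> = \<epsilon> / 2" using tau by (simp add: field_simps)
    finally show "\<epsilon>1 * (\<tau> + 1) \<le> \<epsilon> / 2" .
  qed
  define K where "K = 2 * (\<kappa> + 1)"
  have K: "K > 0" using kp by (simp add: K_def)
  define \<eta> where "\<eta> = \<epsilon> / (2 * (K * Mk + 1))"
  have KM: "K * Mk > 0" using K Mk by simp
  have eta: "\<eta> > 0" unfolding \<eta>_def using ep KM by (intro divide_pos_pos) auto
  have etaK: "K * (\<eta> * Mk) \<le> \<epsilon> / 2"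
  proof -
    have "K * (\<eta> * Mk) = (\<epsilon> / 2) * (K * Mk / (K * Mk + 1))" using K Mk by (simp add: \<eta>_def field_simps)
    also have "\<dots> \<le> (\<epsilon> / 2) * 1"
    proof -
      have "K * Mk / (K * Mk + 1) \<le> 1" using KM by (simp add: divide_le_eq_1_pos)
      then show ?thesis using ep by (intro mult_left_mono) auto
    qed
    finally show ?thesis by simp
  qed
  define \<eta>' where "\<eta>' = \<epsilon>1 / (2 * (L + 1) * (nh + 1))"
  have eta': "\<eta>' > 0" using e1 lip nh by (simp add: \<eta>'_def)
  have etaL: "L * (\<eta>' * nh) \<le> \<epsilon>1 / 2"
  proof -
    have "L * (\<eta>' * nh) = (\<epsilon>1 / 2) * (L / (L + 1)) * (nh / (nh + 1))" using lip nh by (simp add: \<eta>'_def field_simps)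
    also have "\<dots> \<le> (\<epsilon>1 / 2) * 1 * 1"
    proof -
      have a: "L / (L + 1) \<le> 1" using lip by (simp add: divide_le_eq_1_pos)
      have b: "nh / (nh + 1) \<le> 1" using nh by (simp add: divide_le_eq_1_pos)
      show ?thesis using a b lip nh e1 by (intro mult_mono) auto
    qed
    finally show ?thesis by simp
  qed
  obtain d1 where d1: "d1 > 0" "\<forall>z. norm (z - b) < d1 \<longrightarrow> norm (g z - g b - A (z - b)) \<le> \<eta> * norm (z - b)"
    using gdb eta unfolding has_derivative_at_alt by blast
  obtain d2 where d2: "d2 > 0" "\<forall>z. norm (z - b) < d2 \<longrightarrow> norm (g z - g b - A (z - b)) \<le> \<eta>' * norm (z - b)"
    using gdb eta' unfolding has_derivative_at_alt by blast
  define nAh where "nAh = norm (A h)"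
  have nAh: "nAh \<ge> 0" by (simp add: nAh_def)
  have dpos: "\<delta> - dist xbar b > 0" using bB by simp
  define c where "c = min (min ((\<delta> - dist xbar b) / (nh + 1)) (d2 / (nh + 1)))
                         (min (d1 / Mk) (\<rho>f / (nAh + \<eta>' * nh + 1)))"
  have "\<eta>' * nh \<ge> 0" using eta' nh by simp
  then have den: "nAh + \<eta>' * nh + 1 > 0" using nAh by linarith
  have c: "c > 0" using dpos d1(1) d2(1) nh Mk lip(1) den by (simp add: c_def)
  have quot: "eventually (\<lambda>t. (f (y + t *\<^sub>R A h) - f y) / t < dir_deriv f y (A h) + \<epsilon>1 / 2) (at_right 0)"
    using dir_deriv_tendsto(1)[OF cf, of y "A h"] e1 by (intro order_tendstoD) auto
  have "eventually (\<lambda>t. t \<in> {0<..<c} \<and> (f (y + t *\<^sub>R A h) - f y) / t < dir_deriv f y (A h) + \<epsilon>1 / 2) (at_right 0)"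
    using eventually_conj[OF eventually_at_right_real[OF c] quot] .
  then obtain t where t: "0 < t" "t < c" "(f (y + t *\<^sub>R A h) - f y) / t < dir_deriv f y (A h) + \<epsilon>1 / 2"
    unfolding eventually_at_right_field by (metis (no_types, lifting) field_lbound_gt_zero greaterThanLessThan_iff)
  have cc: "t < (\<delta> - dist xbar b) / (nh + 1)" "t < d2 / (nh + 1)" "t < d1 / Mk" "t < \<rho>f / (nAh + \<eta>' * nh + 1)"
    using t(2) by (auto simp: c_def)
  have nh1: "nh + 1 > 0" using nh by simp
  have tb: "t * (nh + 1) < \<delta> - dist xbar b" "t * (nh + 1) < d2" "t * Mk < d1" "t * (nAh + \<eta>' * nh + 1) < \<rho>f"
    using cc nh1 Mk den by (simp_all add: pos_less_divide_eq)
  define xt where "xt = b + t *\<^sub>R h"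
  have nxt: "norm (xt - b) = t * nh" using t by (simp add: xt_def nh_def)
  have Ath: "A (xt - b) = t *\<^sub>R A h" by (simp add: xt_def blinfun.scaleR_right)
  have fy: "f y = 0" using fb by (simp add: y_def)
  have fy1: "f (y + t *\<^sub>R A h) \<le> t * (1 + \<epsilon>1 / 2)"
  proof -
    have "(f (y + t *\<^sub>R A h) - f y) / t < 1 + \<epsilon>1 / 2" using t(3) hC by (simp add: y_def A_def)
    then show ?thesis using t(1) fy by (simp add: field_simps)
  qed
  have fr: "norm (g xt - y - t *\<^sub>R A h) \<le> \<eta>' * (t * nh)"
  proof -
    have "t * nh \<le> t * (nh + 1)" using t by simp
    then have "norm (xt - b) < d2" using nxt tb by simp
    then have "norm (g xt - g b - A (xt - b)) \<le> \<eta>' * norm (xt - b)" using d2(2) by blast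
    then show ?thesis using nxt Ath by (simp add: y_def)
  qed
  define q where "q = y + t *\<^sub>R A h"
  have tn: "t * nAh + \<eta>' * (t * nh) < \<rho>f"
  proof -
    have "t * nAh + \<eta>' * (t * nh) \<le> t * (nAh + \<eta>' * nh + 1)" using t by (simp add: algebra_simps)
    then show ?thesis using tb by simp
  qed
  have qB: "q \<in> ball y \<rho>f"
  proof -
    have "dist y q = t * nAh" using t by (simp add: q_def dist_norm nAh_def)
    then show ?thesis using tn eta' t nh by simp (smt (verit) mult_nonneg_nonneg)
  qed
  have pB: "g xt \<in> ball y \<rho>f"
  proof -
    have "dist y (g xt) \<le> norm (g xt - q) + norm (q - y)"
      using norm_triangle_ineq[of "g xt - q" "q - y"] by (simp add: dist_norm norm_minus_commute)
    also have "norm (g xt - q) \<le> \<eta>' * (t * nh)" using fr by (simp add: q_def algebra_simps)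
    also have "norm (q - y) = t * nAh" using t by (simp add: q_def nAh_def)
    finally show ?thesis using tn by simp
  qed
  have phi: "f (g xt) \<le> t * (1 + \<epsilon>1)"
  proof -
    have "f (g xt) \<le> f q + L * norm (g xt - q)" using lip(3) pB qB by blast
    also have "L * norm (g xt - q) \<le> L * (\<eta>' * (t * nh))"
      using fr lip by (intro mult_left_mono) (simp_all add: q_def algebra_simps)
    also have "L * (\<eta>' * (t * nh)) = t * (L * (\<eta>' * nh))" by (simp add: mult_ac)
    also have "\<dots> \<le> t * (\<epsilon>1 / 2)" using etaL t by (intro mult_left_mono) auto
    finally show ?thesis using fy1 by (simp add: q_def algebra_simps)
  qed
  have xtB: "xt \<in> ball xbar \<delta>"
  proof -
    have "dist xbar xt \<le> dist xbar b + dist b xt" by (rule dist_triangle)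
    also have "dist b xt = t * nh" using nxt by (simp add: dist_norm norm_minus_commute)
    also have "t * nh \<le> t * (nh + 1)" using t by simp
    finally show ?thesis using tb by simp
  qed
  have "setdist_e xt S \<le> ereal (\<tau> * max (f (g xt)) 0)" using EB xtB by (simp add: S_def)
  then have "infdist xt S \<le> \<tau> * max (f (g xt)) 0" using Sne by (simp add: setdist_e_ne S_def)
  also have "\<dots> \<le> \<tau> * (t * (1 + \<epsilon>1))" using phi t e1 tau by (intro mult_left_mono) auto
  finally have idxt: "infdist xt S \<le> \<tau> * (t * (1 + \<epsilon>1))" .
  obtain s where sS: "s \<in> S" and ds: "dist xt s < infdist xt S + t * \<epsilon>1"
    using infdist_approx[of S "t * \<epsilon>1" xt] Sne t e1 by (auto simp: S_def)
  define k where "k = (1 / t) *\<^sub>R (s - b)"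
  have hk: "norm (h - k) = dist xt s / t"
  proof -
    have "h - k = (1 / t) *\<^sub>R (xt - s)" using t by (simp add: k_def xt_def algebra_simps)
    then show ?thesis using t by (simp add: dist_norm)
  qed
  have hk2: "norm (h - k) < \<tau> + \<epsilon> / 2"
  proof -
    have "dist xt s < t * (\<tau> * (1 + \<epsilon>1) + \<epsilon>1)" using ds idxt by (simp add: algebra_simps)
    then have "dist xt s / t < \<tau> * (1 + \<epsilon>1) + \<epsilon>1" using t by (simp add: field_simps)
    moreover have "\<tau> * (1 + \<epsilon>1) + \<epsilon>1 = \<tau> + \<epsilon>1 * (\<tau> + 1)" by (simp add: algebra_simps)
    ultimately show ?thesis using hk e1 by simp
  qed
  have nk: "norm k < Mk"
  proof -
    have "norm k \<le> norm h + norm (h - k)" using norm_triangle_ineq4[of h "h - k"] by simp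
    then show ?thesis using hk2 ep by (simp add: Mk_def nh_def)
  qed
  have sb: "s - b = t *\<^sub>R k" using t by (simp add: k_def)
  have nsb: "norm (s - b) < d1"
  proof -
    have "norm (s - b) = t * norm k" using t by (simp add: sb)
    also have "\<dots> \<le> t * Mk" using nk t by (intro mult_left_mono) auto
    finally show ?thesis using tb by simp
  qed
  have frs: "norm (g s - y - A (s - b)) \<le> \<eta> * norm (s - b)" using d1(2) nsb by (simp add: y_def)
  define w0 where "w0 = (1 / t) *\<^sub>R (g s - y)"
  have w0T: "w0 \<in> bouligand_cone Sf y"
    unfolding w0_def using bouligand_convex[OF convex_sublevel0[OF cf], of y "g s" "1 / t"] fy sS t
    by (simp add: Sf_def S_def)
  define r where "r = w0 - A k"
  have "r = (1 / t) *\<^sub>R (g s - y - A (s - b))"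
    using t by (simp add: r_def w0_def sb blinfun.scaleR_right scaleR_diff_right)
  then have "norm r = norm (g s - y - A (s - b)) / t" using t by simp
  also have "\<dots> \<le> \<eta> * norm (s - b) / t" using frs t by (intro divide_right_mono) auto
  also have "\<eta> * norm (s - b) / t = \<eta> * norm k" using t by (simp add: sb)
  finally have nr: "norm r \<le> \<eta> * norm k" .
  obtain u where u: "norm u \<le> K * norm r" "A u = r" using exact[of r] by (auto simp: K_def)
  have kuD: "k + u \<in> D"
  proof -
    have "A (k + u) = w0" using u by (simp add: blinfun.add_right r_def)
    then show ?thesis using w0T by (simp add: D_def)
  qed
  have nu: "norm u \<le> \<epsilon> / 2"
  proof -
    have "K * norm r \<le> K * (\<eta> * norm k)" using nr K by (intro mult_left_mono) auto
    then have "norm u \<le> K * (\<eta> * norm k)" using u(1) by linarith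
    also have "\<dots> \<le> K * (\<eta> * Mk)" using nk K eta by (intro mult_left_mono) auto
    finally show ?thesis using etaK by simp
  qed
  have "infdist h D \<le> dist h (k + u)" using kuD by (rule infdist_le)
  also have "dist h (k + u) \<le> norm (h - k) + norm u"
    using norm_triangle_ineq4[of "h - k" u] by (simp add: dist_norm algebra_simps)
  also have "\<dots> \<le> \<tau> + \<epsilon>" using hk2 nu by simp
  finally show ?thesis by (simp add: D_def A_def Sf_def y_def)
qed




lemma g_cont:
  fixes g :: "'a::real_normed_vector \<Rightarrow> 'b::real_normed_vector"
  assumes gd: "\<And>x. (g has_derivative blinfun_apply (g' x)) (at x)"
  shows "continuous_on UNIV g"
  using gd has_derivative_continuous by (blast intro: continuous_at_imp_continuous_on)

lemma lin_aux: "(te::real) = (t - t2) / 8 \<Longrightarrow> t2e \<le> te \<Longrightarrow> tc \<le> te \<Longrightarrow> t2 < t \<Longrightarrow> c = t2 + t2e \<Longrightarrow> c \<le> t - te - tc"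
  by (simp add: field_simps)

lemma claimB:
  fixes g :: "'a::banach \<Rightarrow> 'b::banach" and g' :: "'a \<Rightarrow> ('a \<Rightarrow>\<^sub>L 'b)" and f :: "'b \<Rightarrow> real"
  assumes gd: "\<And>x. (g has_derivative blinfun_apply (g' x)) (at x)"
    and g'c: "continuous_on UNIV g'"
    and cf: "convex_on UNIV f" and fc: "continuous_on UNIV f"
    and xS: "f (g xbar) \<le> 0"
    and MR: "\<forall>x\<in>U. \<forall>y\<in>V. setdist_e x (g -` {y}) \<le> ereal (\<kappa> * norm (g x - y))"
    and kp: "\<kappa> > 0" and oU: "open U" and oV: "open V" and xU: "xbar \<in> U" and gxV: "g xbar \<in> V"
    and t2: "\<tau>2 > 0" and t2t: "\<tau>2 < \<tau>" and d0: "\<delta>0 > 0"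
    and bnd: "\<forall>b\<in>frontier {z. f (g z) \<le> 0} \<inter> ball xbar \<delta>0. \<forall>h. dir_deriv f (g b) (g' b h) \<le> 1 \<longrightarrow>
               infdist h {h. g' b h \<in> bouligand_cone {y. f y \<le> 0} (g b)} < \<tau>2"
  shows "\<exists>\<delta>>0. \<forall>x\<in>ball xbar \<delta>. setdist_e x {z. f (g z) \<le> 0} \<le> ereal (\<tau> * max (f (g x)) 0)"
proof -
  define S where "S = {z. f (g z) \<le> 0}"
  define Sf where "Sf = {y. f y \<le> (0::real)}"
  have gc: "continuous_on UNIV g" by (rule g_cont[OF gd])
  have phic: "continuous_on UNIV (\<lambda>x. f (g x))"
    using continuous_on_compose[OF gc, of f] fc by (simp add: o_def continuous_on_subset)
  have clS: "closed S" unfolding S_def by (intro closed_Collect_le phic continuous_on_const)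
  have xbS: "xbar \<in> S" using xS by (simp add: S_def)
  have tau: "\<tau> > 0" using t2 t2t by simp
  define \<epsilon> where "\<epsilon> = (\<tau> - \<tau>2) / (8 * \<tau>)"
  have ep: "\<epsilon> > 0" "\<epsilon> < 1" using t2 t2t tau by (auto simp: \<epsilon>_def field_simps)
  have tep: "\<tau> * \<epsilon> = (\<tau> - \<tau>2) / 8" using tau by (simp add: \<epsilon>_def)
  have t2ep: "\<tau>2 * \<epsilon> \<le> \<tau> * \<epsilon>" using t2t ep by (intro mult_right_mono) auto
  define ybar where "ybar = g xbar"
  obtain \<rho>f L where lip: "\<rho>f > 0" "L > 0" "\<forall>p\<in>ball ybar \<rho>f. \<forall>q\<in>ball ybar \<rho>f. f p \<le> f q + L * norm (p - q)"
    using convex_local_lip[OF cf fc, of ybar] by blast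
  define a1 where "a1 = (1 + \<epsilon>) * \<tau>2"
  have a1: "a1 > 0" using ep t2 by (simp add: a1_def)
  define \<eta> where "\<eta> = \<epsilon> / (a1 * (L + 1))"
  have eta: "\<eta> > 0" using ep a1 lip by (simp add: \<eta>_def)
  have a1eta: "a1 * \<eta> = \<epsilon> / (L + 1)" using a1 lip by (simp add: \<eta>_def)
  define c1 where "c1 = (1 + \<epsilon>) * \<tau>2"
  define c2 where "c2 = (1 + \<epsilon>) * \<tau>2 * L * \<eta>"
  have c2: "c2 \<le> \<epsilon>" "c2 \<ge> 0"
  proof -
    have "c2 = L * (a1 * \<eta>)" by (simp add: c2_def a1_def mult_ac)
    also have "\<dots> = \<epsilon> * (L / (L + 1))" by (simp add: a1eta)
    also have "\<dots> \<le> \<epsilon> * 1"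
    proof -
      have "L / (L + 1) \<le> 1" using lip by (simp add: divide_le_eq_1_pos)
      then show ?thesis using ep by (intro mult_left_mono) auto
    qed
    finally show "c2 \<le> \<epsilon>" by simp
    show "c2 \<ge> 0" using ep t2 lip eta by (simp add: c2_def)
  qed
  have tc2: "\<tau> * c2 \<le> \<tau> * \<epsilon>" using c2 tau by (intro mult_left_mono) auto
  have den: "1 - \<epsilon> - c2 > 0"
  proof -
    have "\<epsilon> < 1 / 8" using t2 t2t tau by (simp add: \<epsilon>_def field_simps)
    then show ?thesis using c2 by linarith
  qed
  have key: "c1 \<le> \<tau> * (1 - \<epsilon> - c2)"
  proof -
    have "c1 = \<tau>2 + \<tau>2 * \<epsilon>" by (simp add: c1_def algebra_simps)
    moreover have "\<tau> * (1 - \<epsilon> - c2) = \<tau> - \<tau> * \<epsilon> - \<tau> * c2" by (simp add: algebra_simps)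
    moreover have "c1 \<le> \<tau> - \<tau> * \<epsilon> - \<tau> * c2"
      using lin_aux[OF tep t2ep tc2 t2t \<open>c1 = \<tau>2 + \<tau>2 * \<epsilon>\<close>] .
    ultimately show ?thesis by linarith
  qed
  obtain rg where rg: "rg > 0" "\<forall>a\<in>ball xbar rg. \<forall>b\<in>ball xbar rg. norm (g b - g a - g' a (b - a)) \<le> \<eta> * norm (b - a)"
    using linearization_bound[OF gd g'c eta, of xbar] by blast
  obtain rU where rU: "rU > 0" "ball xbar rU \<subseteq> U" using oU xU open_contains_ball by blast
  obtain rV where rV: "rV > 0" "ball ybar rV \<subseteq> V" using oV gxV open_contains_ball unfolding ybar_def by blast
  obtain rc where rc: "rc > 0" "\<forall>x. dist x xbar < rc \<longrightarrow> dist (g x) ybar < min (\<rho>f / 2) rV"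
    using gc lip rV unfolding continuous_on_iff ybar_def by (metis UNIV_I half_gt_zero min_less_iff_conj)
  define R where "R = min (min (min rg rU) (min rc \<delta>0)) (\<rho>f / (\<eta> + 1))"
  have R: "R > 0" using rg rU rc d0 lip eta by (simp add: R_def)
  define \<delta> where "\<delta> = R / 2"
  have "\<forall>x\<in>ball xbar \<delta>. setdist_e x S \<le> ereal (\<tau> * max (f (g x)) 0)"
  proof
    fix x assume xB: "x \<in> ball xbar \<delta>"
    show "setdist_e x S \<le> ereal (\<tau> * max (f (g x)) 0)"
    proof (cases "f (g x) \<le> 0")
      case True
      then have "x \<in> S" by (simp add: S_def)
      then have "S \<noteq> {}" by auto
      then have "setdist_e x S = ereal 0" using \<open>x \<in> S\<close> by (simp add: setdist_e_ne)
      then show ?thesis using True by simp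
    next
      case False
      then have phiz: "f (g x) > 0" by simp
      define z where "z = x"
      have zB: "dist xbar z < \<delta>" using xB by (simp add: z_def)
      obtain b where bS: "b \<in> S" and bz: "dist z b \<le> dist z xbar"
        and ek0: "\<forall>s\<in>S. dist z b - \<epsilon> * dist s b \<le> dist z s"
        using ekeland_dist[OF clS xbS ep(1), of z] by blast
      define k where "k = z - b"
      have nk: "norm k = dist z b" by (simp add: k_def dist_norm)
      have zS: "z \<notin> S" using phiz by (simp add: S_def z_def)
      have k0: "norm k > 0" using zS bS by (auto simp: k_def)
      have bB: "dist xbar b < R"
      proof -
        have "dist xbar b \<le> dist xbar z + dist z b" by (rule dist_triangle)
        also have "\<dots> \<le> 2 * dist xbar z" using bz by (simp add: dist_commute)
        finally show ?thesis using zB by (simp add: \<delta>_def)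
      qed
      have nkd: "norm k < \<delta>" using nk bz zB by (simp add: dist_commute)
      have notint: "b \<notin> interior S"
      proof
        assume "b \<in> interior S"
        then obtain e where e: "e > 0" "ball b e \<subseteq> S" by (auto simp: mem_interior)
        define t where "t = min (1/2) (e / (2 * norm k))"
        have t: "t > 0" "t \<le> 1/2" "t \<le> e / (2 * norm k)" using e k0 by (auto simp: t_def)
        define s where "s = b + t *\<^sub>R k"
        have "dist b s = t * norm k" using t by (simp add: s_def dist_norm)
        also have "\<dots> \<le> e / 2" using t k0 by (simp add: field_simps)
        finally have "s \<in> S" using e by auto
        then have "dist z b - \<epsilon> * dist s b \<le> dist z s" using ek0 by blast
        moreover have "dist s b = t * norm k" using t by (simp add: s_def dist_norm)
        moreover have "dist z s = (1 - t) * norm k"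
        proof -
          have "z - s = (1 - t) *\<^sub>R k" by (simp add: s_def k_def algebra_simps)
          then show ?thesis using t by (simp add: dist_norm)
        qed
        ultimately have "norm k - \<epsilon> * (t * norm k) \<le> (1 - t) * norm k" using nk by simp
        then have "t * norm k \<le> \<epsilon> * (t * norm k)" by (simp add: algebra_simps)
        then have "1 * (t * norm k) \<le> \<epsilon> * (t * norm k)" by simp
        then have "1 \<le> \<epsilon>" using t k0 by (simp add: mult_le_cancel_right)
        then show False using ep by simp
      qed
      have bfr: "b \<in> frontier S" using bS notint closure_subset by (auto simp: frontier_def)
      have fgb: "f (g b) = 0"
      proof (rule ccontr)
        assume "f (g b) \<noteq> 0"
        then have "f (g b) < 0" using bS by (simp add: S_def)
        moreover have "open {x. f (g x) < 0}" by (intro open_Collect_less phic continuous_on_const)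
        moreover have "{x. f (g x) < 0} \<subseteq> S" by (auto simp: S_def)
        ultimately have "b \<in> interior S" using interior_maximal by blast
        then show False using notint by simp
      qed
      have bU: "b \<in> U" using rU bB by (auto simp: R_def dist_commute)
      have bc: "dist b xbar < rc" using bB by (simp add: R_def dist_commute)
      have gbV: "g b \<in> V" using rc(2) bc rV by (auto simp: dist_commute)
      have zc: "dist z xbar < rc" using zB R by (simp add: \<delta>_def R_def dist_commute)
      have gzB: "dist (g z) ybar < \<rho>f / 2" using rc(2) zc by simp
      have bg: "b \<in> ball xbar rg" "z \<in> ball xbar rg" using bB zB R by (auto simp: R_def \<delta>_def)
      define y where "y = g b"
      define A where "A = g' b"
      have gdb: "(g has_derivative blinfun_apply A) (at b)" using gd by (simp add: A_def)
      have lin: "norm (g z - g b - A k) \<le> \<eta> * norm k"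
        using rg(2) bg by (simp add: A_def k_def)
      define a where "a = dir_deriv f y (A k)"
      have a1: "a \<le> f (y + A k)"
        using dir_deriv_tendsto(2)[OF cf, of 1 y "A k"] fgb by (simp add: a_def y_def)
      have etak: "\<eta> * norm k < \<rho>f / 2"
      proof -
        have "\<eta> * norm k \<le> \<eta> * \<delta>" using nkd eta by simp
        also have "R \<le> \<rho>f / (\<eta> + 1)" by (simp add: R_def)
        then have "\<delta> \<le> \<rho>f / (\<eta> + 1) / 2" unfolding \<delta>_def by (rule divide_right_mono) simp
        then have "\<eta> * \<delta> \<le> \<eta> * (\<rho>f / (\<eta> + 1) / 2)" using eta by (intro mult_left_mono) auto
        also have "\<dots> = (\<rho>f / 2) * (\<eta> / (\<eta> + 1))" by (simp add: field_simps)
        also have "\<dots> < (\<rho>f / 2) * 1" using eta lip by (intro mult_strict_left_mono) auto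
        finally show ?thesis by simp
      qed
      have yAk: "y + A k \<in> ball ybar \<rho>f"
      proof -
        have "dist ybar (y + A k) \<le> dist ybar (g z) + dist (g z) (y + A k)" by (rule dist_triangle)
        also have "dist (g z) (y + A k) = norm (g z - g b - A k)" by (simp add: dist_norm y_def algebra_simps)
        finally show ?thesis using lin gzB etak by (simp add: dist_commute)
      qed
      have gzB2: "g z \<in> ball ybar \<rho>f" using gzB lip by (simp add: dist_commute)
      have "f (y + A k) \<le> f (g z) + L * norm (y + A k - g z)" using lip(3) yAk gzB2 by blast
      also have "norm (y + A k - g z) = norm (g z - g b - A k)" by (simp add: y_def norm_minus_commute algebra_simps)
      also have "L * norm (g z - g b - A k) \<le> L * (\<eta> * norm k)" using lin lip by (intro mult_left_mono) auto
      finally have a2: "a \<le> f (g z) + L * \<eta> * norm k" using a1 by (simp add: mult.assoc)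
      define phi where "phi = f (g z)"
      have phi: "phi > 0" using phiz by (simp add: phi_def z_def)
      define a' where "a' = max a phi"
      have a': "a' > 0" "a \<le> a'" "a' \<le> phi + L * \<eta> * norm k"
        using phi a2 lip eta by (auto simp: a'_def phi_def)
      define h where "h = (1 / a') *\<^sub>R k"
      have Ah: "A h = (1 / a') *\<^sub>R A k" by (simp add: h_def blinfun.scaleR_right)
      have hC: "dir_deriv f (g b) (g' b h) \<le> 1"
      proof -
        have "dir_deriv f (g b) (g' b h) = (1 / a') * a"
          using dir_deriv_scale[OF cf, of "1 / a'" y "A k"] a' Ah by (simp add: a_def y_def A_def)
        also have "\<dots> \<le> 1" using a' by (simp add: field_simps)
        finally show ?thesis .
      qed
      have bd0: "b \<in> frontier S \<inter> ball xbar \<delta>0" using bfr bB by (simp add: R_def)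
      define D where "D = {h. g' b h \<in> bouligand_cone Sf (g b)}"
      have idh: "infdist h D < \<tau>2" using bnd bd0 hC by (simp add: D_def S_def Sf_def)
      have fy: "y \<in> Sf" using fgb by (simp add: Sf_def y_def)
      have D0: "0 \<in> D"
        using bouligand_convex[OF convex_sublevel0[OF cf] _ _ order_refl, of y y] fy
        by (simp add: D_def Sf_def y_def)
      then have Dne: "D \<noteq> {}" by auto
      obtain w where wD: "w \<in> D" and hw: "dist h w < \<tau>2"
        using infdist_approx[OF Dne, of "\<tau>2 - infdist h D" h] idh by auto
      define w' where "w' = a' *\<^sub>R w"
      have w'T: "A w' \<in> bouligand_cone Sf y"
        using bouligand_scale[of "A w" Sf y a'] wD a' by (simp add: w'_def D_def A_def y_def blinfun.scaleR_right)
      have ek: "norm k - \<epsilon> * norm (s - b) \<le> norm (k - (s - b))" if "g s \<in> Sf" for s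
      proof -
        have "s \<in> S" using that by (simp add: S_def Sf_def)
        then have "dist z b - \<epsilon> * dist s b \<le> dist z s" using ek0 by blast
        moreover have "z - s = k - (s - b)" by (simp add: k_def)
        ultimately show ?thesis using nk by (simp add: dist_norm)
      qed
      have kb: "norm k - \<epsilon> * norm w' \<le> norm (k - w')"
        using keyB[OF MR kp oU oV bU gbV gdb _ _ ek, of w'] w'T ep by (simp add: y_def)
      have kw: "norm (k - w') = a' * dist h w"
      proof -
        have "k - w' = a' *\<^sub>R (h - w)" using a' by (simp add: h_def w'_def algebra_simps)
        then show ?thesis using a' by (simp add: dist_norm)
      qed
      have kw2: "norm (k - w') < a' * \<tau>2" using kw hw a' by simp
      have nw': "norm w' \<le> norm k + norm (k - w')" using norm_triangle_ineq4[of k "k - w'"] by simp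
      have "norm k - \<epsilon> * (norm k + a' * \<tau>2) < a' * \<tau>2"
      proof -
        have "\<epsilon> * norm w' \<le> \<epsilon> * (norm k + a' * \<tau>2)" using nw' kw2 ep by (intro mult_left_mono) auto
        then show ?thesis using kb kw2 by linarith
      qed
      then have s1: "(1 - \<epsilon>) * norm k < (1 + \<epsilon>) * \<tau>2 * a'" by (simp add: algebra_simps)
      have "(1 + \<epsilon>) * \<tau>2 * a' \<le> (1 + \<epsilon>) * \<tau>2 * (phi + L * \<eta> * norm k)"
        using a' ep t2 by (intro mult_left_mono) auto
      also have "\<dots> = c1 * phi + c2 * norm k" by (simp add: c1_def c2_def algebra_simps)
      finally have "(1 - \<epsilon> - c2) * norm k < c1 * phi" using s1 by (simp add: algebra_simps)
      also have "c1 * phi \<le> \<tau> * (1 - \<epsilon> - c2) * phi" using key phi by (intro mult_right_mono) auto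
      finally have "(1 - \<epsilon> - c2) * norm k < (1 - \<epsilon> - c2) * (\<tau> * phi)" by (simp add: mult_ac)
      then have nkphi: "norm k < \<tau> * phi" using den by simp
      have "setdist_e x S = ereal (infdist x S)" using bS by (intro setdist_e_ne) auto
      also have "infdist x S \<le> dist x b" using bS by (rule infdist_le)
      also have "dist x b = norm k" using nk by (simp add: z_def)
      finally have sd: "setdist_e x S \<le> ereal (norm k)" by simp
      moreover have "ereal (norm k) \<le> ereal (\<tau> * max (f (g x)) 0)" using nkphi phi by (simp add: phi_def z_def)
      ultimately show ?thesis by (rule order_trans)
    qed
  qed
  then show ?thesis using R by (intro exI[of _ \<delta>]) (auto simp: \<delta>_def S_def)
qed




lemma excess_nonneg: "excess C D \<ge> 0"
proof (cases "C = {}")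
  case True then show ?thesis by (simp add: excess_def)
next
  case False
  then obtain h where "h \<in> C" by auto
  moreover have "setdist_e h D \<ge> 0" by (simp add: setdist_e_def infdist_nonneg)
  ultimately have "0 \<le> (SUP x\<in>C. setdist_e x D)" by (intro SUP_upper2) auto
  then show ?thesis using False by (simp add: excess_def)
qed

lemma excess_le:
  assumes "C \<noteq> {}" "D \<noteq> {}" "\<And>h. h \<in> C \<Longrightarrow> infdist h D \<le> c"
  shows "excess C D \<le> ereal c"
  using assms by (auto simp: excess_def setdist_e_ne intro!: SUP_least)

lemma excess_ge:
  assumes "h \<in> C" "D \<noteq> {}"
  shows "ereal (infdist h D) \<le> excess C D"
proof -
  have "setdist_e h D \<le> (SUP x\<in>C. setdist_e x D)" using assms by (intro SUP_upper) auto
  then show ?thesis using assms by (auto simp: excess_def setdist_e_ne)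
qed

lemma limsup_le:
  assumes "\<delta> > 0" "\<And>x. x \<in> D \<inter> ball xbar \<delta> \<Longrightarrow> F x \<le> c" "c \<ge> 0"
  shows "limsup_within D xbar F \<le> c"
proof -
  have "(if D \<inter> ball xbar \<delta> = {} then 0 else (SUP x\<in>D \<inter> ball xbar \<delta>. F x)) \<le> c"
    using assms by (auto intro!: SUP_least)
  then show ?thesis unfolding limsup_within_def
    using assms(1) by (meson INF_lower greaterThan_iff order_trans)
qed

lemma limsup_less:
  assumes "limsup_within D xbar F < c"
  shows "\<exists>\<delta>>0. \<forall>x\<in>D \<inter> ball xbar \<delta>. F x < c"
proof -
  obtain \<delta> where d: "\<delta> > 0" "(if D \<inter> ball xbar \<delta> = {} then 0 else (SUP x\<in>D \<inter> ball xbar \<delta>. F x)) < c"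
    using assms unfolding limsup_within_def INF_less_iff by auto
  have "F x < c" if "x \<in> D \<inter> ball xbar \<delta>" for x
  proof -
    have "F x \<le> (SUP x\<in>D \<inter> ball xbar \<delta>. F x)" using that by (intro SUP_upper)
    moreover have ne: "D \<inter> ball xbar \<delta> \<noteq> {}" using that by blast
    then have "(SUP x\<in>D \<inter> ball xbar \<delta>. F x) < c" using d(2) by simp
    ultimately show ?thesis by (rule order.strict_trans1)
  qed
  then show ?thesis using d by blast
qed

lemma limsup_nonneg:
  assumes "\<And>x. F x \<ge> 0"
  shows "limsup_within D xbar F \<ge> 0"
  unfolding limsup_within_def
proof (intro INF_greatest)
  fix \<delta> assume "\<delta> \<in> {0::real<..}"
  show "0 \<le> (if D \<inter> ball xbar \<delta> = {} then 0 else (SUP x\<in>D \<inter> ball xbar \<delta>. F x))"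
  proof (cases "D \<inter> ball xbar \<delta> = {}")
    case False
    then obtain x where "x \<in> D \<inter> ball xbar \<delta>" by blast
    then have "0 \<le> (SUP x\<in>D \<inter> ball xbar \<delta>. F x)" using assms by (intro SUP_upper2) auto
    then show ?thesis using False by simp
  qed simp
qed

lemma frontier_zero:
  fixes \<phi> :: "'a::real_normed_vector \<Rightarrow> real"
  assumes c: "continuous_on UNIV \<phi>" and b: "b \<in> frontier {x. \<phi> x \<le> 0}"
  shows "\<phi> b = 0"
proof -
  have cl: "closed {x. \<phi> x \<le> 0}" by (intro closed_Collect_le c continuous_on_const)
  have bS: "\<phi> b \<le> 0" using b cl by (auto simp: frontier_def closure_closed)
  show ?thesis
  proof (rule ccontr)
    assume "\<phi> b \<noteq> 0"
    then have "\<phi> b < 0" using bS by simp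
    moreover have "open {x. \<phi> x < 0}" by (intro open_Collect_less c continuous_on_const)
    moreover have "{x. \<phi> x < 0} \<subseteq> {x. \<phi> x \<le> 0}" by auto
    ultimately have "b \<in> interior {x. \<phi> x \<le> 0}" using interior_maximal by blast
    then show False using b by (simp add: frontier_def)
  qed
qed

lemma dir_deriv_zero_le:
  fixes f :: "'b::real_normed_vector \<Rightarrow> real"
  assumes cf: "convex_on UNIV f"
  shows "dir_deriv f y 0 \<le> 1"
  using dir_deriv_tendsto(2)[OF cf, of 1 y 0] by simp

theorem theorem4p5:
  fixes g :: "'a::banach \<Rightarrow> 'b::banach"
    and g' :: "'a \<Rightarrow> ('a \<Rightarrow>\<^sub>L 'b)"
    and f :: "'b \<Rightarrow> real"
    and xbar :: 'a
  assumes g_deriv: "\<And>x. (g has_derivative blinfun_apply (g' x)) (at x)"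
    and g'_cont: "continuous_on UNIV g'"
    and f_convex: "convex_on UNIV f"
    and f_cont: "continuous_on UNIV f"
    and xbar_in: "xbar \<in> {x. f (g x) \<le> 0}"
    and reg: "metrically_regular g xbar"
  shows "(local_error_bound (\<lambda>x. f (g x)) xbar \<longleftrightarrow>
            limsup_within (frontier {x. f (g x) \<le> 0}) xbar
              (\<lambda>x. excess {h. dir_deriv f (g x) (g' x h) \<le> 1}
                           {h. g' x h \<in> bouligand_cone {y. f y \<le> 0} (g x)}) < \<infinity>)
       \<and> error_bound_modulus (\<lambda>x. f (g x)) xbar =
            limsup_within (frontier {x. f (g x) \<le> 0}) xbar
              (\<lambda>x. excess {h. dir_deriv f (g x) (g' x h) \<le> 1}
                           {h. g' x h \<in> bouligand_cone {y. f y \<le> 0} (g x)})"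
proof -
  define S where "S = {x. f (g x) \<le> 0}"
  define C where "C x = {h. dir_deriv f (g x) (g' x h) \<le> 1}" for x
  define D where "D x = {h. g' x h \<in> bouligand_cone {y. f y \<le> 0} (g x)}" for x
  define F where "F x = excess (C x) (D x)" for x
  define \<Lambda> where "\<Lambda> = limsup_within (frontier S) xbar F"
  define adm where "adm \<tau> \<longleftrightarrow> \<tau> > 0 \<and> (\<exists>\<delta>>0. \<forall>x\<in>ball xbar \<delta>. setdist_e x S \<le> ereal (\<tau> * max (f (g x)) 0))" for \<tau>
  have M: "error_bound_modulus (\<lambda>x. f (g x)) xbar = Inf {ereal \<tau> | \<tau>. adm \<tau>}"
    by (simp add: error_bound_modulus_def adm_def S_def)
  have LEB: "local_error_bound (\<lambda>x. f (g x)) xbar \<longleftrightarrow> (\<exists>\<tau>. adm \<tau>)"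
    by (auto simp: local_error_bound_def adm_def S_def)
  obtain \<kappa> U V where kp: "\<kappa> > 0" and oU: "open U" and xU: "xbar \<in> U" and oV: "open V"
    and gxV: "g xbar \<in> V" and MR: "\<forall>x\<in>U. \<forall>y\<in>V. setdist_e x (g -` {y}) \<le> ereal (\<kappa> * norm (g x - y))"
    using reg unfolding metrically_regular_def by blast
  have gc: "continuous_on UNIV g" by (rule g_cont[OF g_deriv])
  have phic: "continuous_on UNIV (\<lambda>x. f (g x))"
    using continuous_on_compose[OF gc, of f] f_cont by (simp add: o_def continuous_on_subset)
  have Sne: "S \<noteq> {}" using xbar_in by (auto simp: S_def)
  have fr0: "f (g b) = 0" if "b \<in> frontier S" for b
    using frontier_zero[OF phic, of b] that by (simp add: S_def)
  have C0: "0 \<in> C x" for x using dir_deriv_zero_le[OF f_convex] by (simp add: C_def)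
  have D0: "0 \<in> D x" if "f (g x) \<le> 0" for x
    using bouligand_convex[OF convex_sublevel0[OF f_convex] _ _ order_refl, of "g x" "g x"] that
    by (simp add: D_def)
  have Fnn: "F x \<ge> 0" for x by (simp add: F_def excess_nonneg)
  have Lnn: "\<Lambda> \<ge> 0" unfolding \<Lambda>_def by (rule limsup_nonneg[OF Fnn])
  have A: "\<Lambda> \<le> ereal \<tau>" if admt: "adm \<tau>" for \<tau>
  proof -
    obtain \<delta> where tau: "\<tau> > 0" and d: "\<delta> > 0"
      and EB: "\<forall>x\<in>ball xbar \<delta>. setdist_e x S \<le> ereal (\<tau> * max (f (g x)) 0)"
      using admt unfolding adm_def by blast
    have "open (U \<inter> g -` V)" using oU oV gc by (auto intro: open_vimage)
    then obtain r1 where r1: "r1 > 0" "ball xbar r1 \<subseteq> U \<inter> g -` V"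
      using xU gxV open_contains_ball by blast
    define \<delta>' where "\<delta>' = min r1 \<delta>"
    have d': "\<delta>' > 0" using r1 d by (simp add: \<delta>'_def)
    have "F b \<le> ereal \<tau>" if b: "b \<in> frontier S \<inter> ball xbar \<delta>'" for b
    proof -
      have fb: "f (g b) = 0" using fr0 b by auto
      have bUV: "b \<in> U" "g b \<in> V" using b r1 by (auto simp: \<delta>'_def)
      have bB: "b \<in> ball xbar \<delta>" using b by (auto simp: \<delta>'_def)
      have "infdist h (D b) \<le> \<tau>" if h: "h \<in> C b" for h
      proof (rule field_le_epsilon)
        fix \<epsilon> :: real assume ep: "\<epsilon> > 0"
        have EB': "\<forall>x\<in>ball xbar \<delta>. setdist_e x {z. f (g z) \<le> 0} \<le> ereal (\<tau> * max (f (g x)) 0)"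
          using EB by (simp add: S_def)
        have Sne': "{z. f (g z) \<le> 0} \<noteq> {}" using Sne by (simp add: S_def)
        have h': "dir_deriv f (g b) (g' b h) \<le> 1" using h by (simp add: C_def)
        show "infdist h (D b) \<le> \<tau> + \<epsilon>"
          using claimA_point[OF g_deriv f_convex f_cont MR kp oV bUV fb tau EB' bB Sne' h' ep]
          by (simp add: D_def)
      qed
      then show ?thesis unfolding F_def
        using C0 D0[of b] fb by (intro excess_le) auto
    qed
    then show ?thesis unfolding \<Lambda>_def using d' tau by (intro limsup_le) auto
  qed
  have B: "adm \<tau>" if lt: "\<Lambda> < ereal \<tau>" for \<tau>
  proof -
    obtain z where z: "\<Lambda> < z" "z < ereal \<tau>" using dense[OF lt] by blast
    then obtain \<tau>2 where z2: "z = ereal \<tau>2" using Lnn by (cases z) auto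
    have "(0::ereal) < ereal \<tau>2" using z z2 Lnn by (metis le_less_trans)
    then have t2: "\<tau>2 > 0" by simp
    have t2t: "\<tau>2 < \<tau>" using z z2 by auto
    obtain \<delta>0 where d0: "\<delta>0 > 0" and less: "\<forall>x\<in>frontier S \<inter> ball xbar \<delta>0. F x < ereal \<tau>2"
      using limsup_less[of "frontier S" xbar F "ereal \<tau>2"] z z2 by (auto simp: \<Lambda>_def)
    have bnd: "\<forall>b\<in>frontier {z. f (g z) \<le> 0} \<inter> ball xbar \<delta>0. \<forall>h. dir_deriv f (g b) (g' b h) \<le> 1 \<longrightarrow>
               infdist h {h. g' b h \<in> bouligand_cone {y. f y \<le> 0} (g b)} < \<tau>2"
    proof (intro ballI allI impI)
      fix b h assume b: "b \<in> frontier {z. f (g z) \<le> 0} \<inter> ball xbar \<delta>0"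
        and h: "dir_deriv f (g b) (g' b h) \<le> 1"
      have fb: "f (g b) = 0" using fr0 b by (auto simp: S_def)
      have "ereal (infdist h (D b)) \<le> F b"
        unfolding F_def using h D0[of b] fb by (intro excess_ge) (auto simp: C_def)
      also have "F b < ereal \<tau>2" using less b by (simp add: S_def)
      finally show "infdist h {h. g' b h \<in> bouligand_cone {y. f y \<le> 0} (g b)} < \<tau>2"
        by (simp add: D_def)
    qed
    have "\<exists>\<delta>>0. \<forall>x\<in>ball xbar \<delta>. setdist_e x {z. f (g z) \<le> 0} \<le> ereal (\<tau> * max (f (g x)) 0)"
      using claimB[OF g_deriv g'_cont f_convex f_cont _ MR kp oU oV xU gxV t2 t2t d0 bnd] xbar_in by simp
    then show ?thesis using t2 t2t by (simp add: adm_def S_def)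
  qed
  have eq: "Inf {ereal \<tau> | \<tau>. adm \<tau>} = \<Lambda>"
  proof (rule antisym)
    show "Inf {ereal \<tau> | \<tau>. adm \<tau>} \<le> \<Lambda>"
    proof (rule dense_ge)
      fix x assume x: "\<Lambda> < x"
      show "Inf {ereal \<tau> | \<tau>. adm \<tau>} \<le> x"
      proof (cases x)
        case (real r)
        then have "adm r" using B x by simp
        then have "ereal r \<in> {ereal \<tau> | \<tau>. adm \<tau>}" by blast
        then show ?thesis using real by (simp add: Inf_lower)
      next
        case PInf then show ?thesis by simp
      next
        case MInf then show ?thesis using x by simp
      qed
    qed
    show "\<Lambda> \<le> Inf {ereal \<tau> | \<tau>. adm \<tau>}"
      using A by (auto intro!: Inf_greatest)
  qed
  have iff: "(\<exists>\<tau>. adm \<tau>) \<longleftrightarrow> \<Lambda> < \<infinity>"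
  proof
    assume "\<exists>\<tau>. adm \<tau>"
    then obtain \<tau> where "adm \<tau>" by blast
    then show "\<Lambda> < \<infinity>" using A[of \<tau>] by (auto simp: le_less_trans)
  next
    assume fin: "\<Lambda> < \<infinity>"
    then obtain r where r: "\<Lambda> = ereal r" using Lnn by (cases \<Lambda>) auto
    then have "\<Lambda> < ereal (r + 1)" by simp
    then show "\<exists>\<tau>. adm \<tau>" using B by blast
  qed
  have Feq: "(\<lambda>x. excess {h. dir_deriv f (g x) (g' x h) \<le> 1}
                           {h. g' x h \<in> bouligand_cone {y. f y \<le> 0} (g x)}) = F"
    by (simp add: fun_eq_iff F_def C_def D_def)
  show ?thesis unfolding Feq
    using LEB M eq iff by (simp add: \<Lambda>_def S_def)
qed


end
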